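(* For $i=1,\dots,n$ let $\mathbf a_i=(a_{i,1},\dots,a_{i,r_i})\in\mathbb{F}^{r_i}$ be a $(\sigma,\delta)$-multiplicity sequence, and assume $a_{1,1},\dots,a_{n,1}$ are distinct. Let $a_1,\dots,a_\ell\in\mathbb{F}$ be pairwise non-conjugate, $n_i\in\mathbb{Z}_+$ and $\beta_{i,1},\dots,\beta_{i,n_i}\in\mathbb{F}^*$ be such that $n=n_1+\dots+n_\ell$ and $\{a_{1,1},\dots,a_{n,1}\}=\bigcup_{i=1}^\ell\{a_i^{\beta_{i,1}},\dots,a_i^{\beta_{i,n_i}}\}$. The following are equivalent: (1) $\Omega=\{P_{\mathbf a_1},\dots,P_{\mathbf a_n}\}$ is P-independent; (2) $\Psi=\{a_{1,1},\dots,a_{n,1}\}\subseteq\mathbb{F}$ is P-independent; (3) for each $i=1,\dots,\ell$, the elements $\beta_{i,1},\dots,\beta_{i,n_i}$ are linearly independent over $K^{\sigma,\delta}_{a_i}$ with $\mathbb{F}$ regarded as a right $K^{\sigma,\delta}_{a_i}$-vector space.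
   Context: Let $\mathbb{F}$ be a division ring, $\sigma$ a ring endomorphism and $\delta$ a $\sigma$-derivation; $\mathbb{F}[x;\sigma,\delta]$ is the skew polynomial ring with $xa=\sigma(a)x+\delta(a)$ (domain with right Euclidean division). For $a\in\mathbb{F}$, $F(a)$ is the remainder of right division of $F$ by $x-a$; $a$ is a (right) zero of $F$ if $F(a)=0$. For $\mathbf a=(a_1,\dots,a_r)$, $P_{\mathbf a}=(x-a_r)\cdots(x-a_1)$; $\mathbf a$ is a $(\sigma,\delta)$-multiplicity sequence if $a_1$ is the only right zero of $P_{\mathbf a}$ in $\mathbb{F}$. Conjugation: $a^\beta=\sigma(\beta)a\beta^{-1}+\delta(\beta)\beta^{-1}$ for $\beta\in\mathbb{F}^*$; $a,b$ conjugate if $b=a^\beta$ for some $\beta$. Centralizer: $K^{\sigma,\delta}_a=\{\beta\in\mathbb{F}:\sigma(\beta)a+\delta(\beta)=a\beta\}$, a division subring. For a set $\Omega$ of skew polynomials, $I(\Omega)$ is the left ideal of skew polynomials right-divisible by every element of $\Omega$ and $F_\Omega$ its monic generator of minimal degree (or $0$); $\Omega$ is P-independent if finite, $I(\Omega)\ne\{0\}$ and $\deg F_\Omega=\sum_{P\in\Omega}\deg P$; a finite set $\{b_1,\dots,b_k\}$ of distinct elements of $\mathbb{F}$ is P-independent if $\{x-b_1,\dots,x-b_k\}$ is. *)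

theory Defs
  imports "HOL-Computational_Algebra.Polynomial"
begin

text \<open>Elements are represented by coefficient polynomials p = sum_k p_k x^k (coefficients
on the left), with the skew multiplication given by x a = sigma(a) x + delta(a).\<close>

definition is_ring_endo :: "('a::division_ring \<Rightarrow> 'a) \<Rightarrow> bool" where
  "is_ring_endo \<sigma> \<longleftrightarrow> (\<forall>x y. \<sigma> (x + y) = \<sigma> x + \<sigma> y) \<and> (\<forall>x y. \<sigma> (x * y) = \<sigma> x * \<sigma> y) \<and> \<sigma> 1 = 1"

definition is_sigma_derivation :: "('a::division_ring \<Rightarrow> 'a) \<Rightarrow> ('a \<Rightarrow> 'a) \<Rightarrow> bool" where
  "is_sigma_derivation \<sigma> \<delta> \<longleftrightarrow> (\<forall>x y. \<delta> (x + y) = \<delta> x + \<delta> y) \<and>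
     (\<forall>x y. \<delta> (x * y) = \<sigma> x * \<delta> y + \<delta> x * y)"

definition xmul :: "('a::division_ring \<Rightarrow> 'a) \<Rightarrow> ('a \<Rightarrow> 'a) \<Rightarrow> 'a poly \<Rightarrow> 'a poly" where
  "xmul \<sigma> \<delta> p = pCons 0 (map_poly \<sigma> p) + map_poly \<delta> p"

definition skew_mult :: "('a::division_ring \<Rightarrow> 'a) \<Rightarrow> ('a \<Rightarrow> 'a) \<Rightarrow> 'a poly \<Rightarrow> 'a poly \<Rightarrow> 'a poly" where
  "skew_mult \<sigma> \<delta> F G = (\<Sum>i\<le>degree F. map_poly (\<lambda>b. coeff F i * b) ((xmul \<sigma> \<delta> ^^ i) G))"

definition xminus :: "'a::division_ring \<Rightarrow> 'a poly" where
  "xminus a = [:- a, 1:]"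

definition skew_eval :: "('a::division_ring \<Rightarrow> 'a) \<Rightarrow> ('a \<Rightarrow> 'a) \<Rightarrow> 'a poly \<Rightarrow> 'a \<Rightarrow> 'a" where
  "skew_eval \<sigma> \<delta> F a = (THE r. \<exists>Q. F = skew_mult \<sigma> \<delta> Q (xminus a) + [:r:])"

text \<open>P_a = (x - a_r) ... (x - a_1) for the list as = [a_1, ..., a_r].\<close>
definition P_seq :: "('a::division_ring \<Rightarrow> 'a) \<Rightarrow> ('a \<Rightarrow> 'a) \<Rightarrow> 'a list \<Rightarrow> 'a poly" where
  "P_seq \<sigma> \<delta> as = foldl (\<lambda>P a. skew_mult \<sigma> \<delta> (xminus a) P) [:1:] as"

definition mult_seq :: "('a::division_ring \<Rightarrow> 'a) \<Rightarrow> ('a \<Rightarrow> 'a) \<Rightarrow> 'a list \<Rightarrow> bool" where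
  "mult_seq \<sigma> \<delta> as \<longleftrightarrow> as \<noteq> [] \<and> {b. skew_eval \<sigma> \<delta> (P_seq \<sigma> \<delta> as) b = 0} = {hd as}"

definition right_dvd :: "('a::division_ring \<Rightarrow> 'a) \<Rightarrow> ('a \<Rightarrow> 'a) \<Rightarrow> 'a poly \<Rightarrow> 'a poly \<Rightarrow> bool" where
  "right_dvd \<sigma> \<delta> G F \<longleftrightarrow> (\<exists>Q. F = skew_mult \<sigma> \<delta> Q G)"

definition I_ideal :: "('a::division_ring \<Rightarrow> 'a) \<Rightarrow> ('a \<Rightarrow> 'a) \<Rightarrow> 'a poly set \<Rightarrow> 'a poly set" where
  "I_ideal \<sigma> \<delta> \<Omega> = {F. \<forall>P\<in>\<Omega>. right_dvd \<sigma> \<delta> P F}"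

definition F_gen :: "('a::division_ring \<Rightarrow> 'a) \<Rightarrow> ('a \<Rightarrow> 'a) \<Rightarrow> 'a poly set \<Rightarrow> 'a poly" where
  "F_gen \<sigma> \<delta> \<Omega> = (if I_ideal \<sigma> \<delta> \<Omega> = {0} then 0 else
     (SOME F. F \<in> I_ideal \<sigma> \<delta> \<Omega> \<and> lead_coeff F = 1 \<and>
        (\<forall>G\<in>I_ideal \<sigma> \<delta> \<Omega>. G \<noteq> 0 \<longrightarrow> degree F \<le> degree G)))"

definition P_indep :: "('a::division_ring \<Rightarrow> 'a) \<Rightarrow> ('a \<Rightarrow> 'a) \<Rightarrow> 'a poly set \<Rightarrow> bool" where
  "P_indep \<sigma> \<delta> \<Omega> \<longleftrightarrow> finite \<Omega> \<and> I_ideal \<sigma> \<delta> \<Omega> \<noteq> {0} \<and>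
     degree (F_gen \<sigma> \<delta> \<Omega>) = (\<Sum>P\<in>\<Omega>. degree P)"

definition P_indep_elems :: "('a::division_ring \<Rightarrow> 'a) \<Rightarrow> ('a \<Rightarrow> 'a) \<Rightarrow> 'a set \<Rightarrow> bool" where
  "P_indep_elems \<sigma> \<delta> B \<longleftrightarrow> finite B \<and> P_indep \<sigma> \<delta> (xminus ` B)"

definition skew_conj :: "('a::division_ring \<Rightarrow> 'a) \<Rightarrow> ('a \<Rightarrow> 'a) \<Rightarrow> 'a \<Rightarrow> 'a \<Rightarrow> 'a" where
  "skew_conj \<sigma> \<delta> a \<beta> = \<sigma> \<beta> * a * inverse \<beta> + \<delta> \<beta> * inverse \<beta>"

definition skew_conjugate :: "('a::division_ring \<Rightarrow> 'a) \<Rightarrow> ('a \<Rightarrow> 'a) \<Rightarrow> 'a \<Rightarrow> 'a \<Rightarrow> bool" where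
  "skew_conjugate \<sigma> \<delta> a b \<longleftrightarrow> (\<exists>\<beta>. \<beta> \<noteq> 0 \<and> b = skew_conj \<sigma> \<delta> a \<beta>)"

definition centralizer :: "('a::division_ring \<Rightarrow> 'a) \<Rightarrow> ('a \<Rightarrow> 'a) \<Rightarrow> 'a \<Rightarrow> 'a set" where
  "centralizer \<sigma> \<delta> a = {\<beta>. \<sigma> \<beta> * a + \<delta> \<beta> = a * \<beta>}"

definition right_lin_indep :: "'a::division_ring set \<Rightarrow> (nat \<Rightarrow> 'a) \<Rightarrow> nat \<Rightarrow> bool" where
  "right_lin_indep K \<beta> m \<longleftrightarrow> (\<forall>c. (\<forall>j<m. c j \<in> K) \<longrightarrow> (\<Sum>j<m. \<beta> j * c j) = 0 \<longrightarrow> (\<forall>j<m. c j = 0))"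

end

theory Submission
  imports Defs
begin


definition cmul :: "'a::division_ring \<Rightarrow> 'a poly \<Rightarrow> 'a poly" where
  "cmul c p = map_poly (\<lambda>b. c * b) p"

lemma coeff_cmul[simp]: "coeff (cmul c p) n = c * coeff p n"
  unfolding cmul_def by (simp add: coeff_map_poly)

lemma cmul_add: "cmul c (p + q) = cmul c p + cmul c q"
  by (rule poly_eqI) (simp add: distrib_left)
lemma cmul_add2: "cmul (c + d) p = cmul c p + cmul d p"
  by (rule poly_eqI) (simp add: distrib_right)
lemma cmul_0[simp]: "cmul 0 p = 0" by (rule poly_eqI) simp
lemma cmul_0'[simp]: "cmul c 0 = 0" by (rule poly_eqI) simp
lemma cmul_1[simp]: "cmul 1 p = p" by (rule poly_eqI) simp
lemma cmul_cmul: "cmul c (cmul d p) = cmul (c * d) p" by (rule poly_eqI) (simp add: mult.assoc)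
lemma cmul_sum: "cmul c (sum f A) = (\<Sum>i\<in>A. cmul c (f i))"
  by (induction A rule: infinite_finite_induct) (auto simp: cmul_add)
lemma cmul_minus: "cmul c (p - q) = cmul c p - cmul c q"
  by (rule poly_eqI) (simp add: right_diff_distrib)
lemma cmul_uminus: "cmul c (- q) = - cmul c q"
  by (rule poly_eqI) simp

lemma map_poly_0_mult[simp]: "map_poly ((*) (0::'a::division_ring)) p = 0"
  by (rule poly_eqI) (simp add: coeff_map_poly)

lemma map_poly_zero_fun[simp]: "map_poly (\<lambda>b. 0) p = 0"
  by (rule poly_eqI) (simp add: coeff_map_poly)

lemma degree_map_poly_le': "f 0 = 0 \<Longrightarrow> degree (map_poly f p) \<le> degree p"
  by (rule degree_le) (simp add: coeff_map_poly coeff_eq_0)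

lemma degree_cmul_le: "degree (cmul c p) \<le> degree p"
  unfolding cmul_def by (rule degree_map_poly_le') simp

locale skew =
  fixes \<sigma> \<delta> :: "'a::division_ring \<Rightarrow> 'a"
  assumes endo: "is_ring_endo \<sigma>" and der: "is_sigma_derivation \<sigma> \<delta>"
begin

lemma s_add: "\<sigma> (x + y) = \<sigma> x + \<sigma> y" using endo unfolding is_ring_endo_def by blast
lemma s_mult: "\<sigma> (x * y) = \<sigma> x * \<sigma> y" using endo unfolding is_ring_endo_def by blast
lemma s_1[simp]: "\<sigma> 1 = 1" using endo unfolding is_ring_endo_def by blast
lemma d_add: "\<delta> (x + y) = \<delta> x + \<delta> y" using der unfolding is_sigma_derivation_def by blast
lemma d_mult: "\<delta> (x * y) = \<sigma> x * \<delta> y + \<delta> x * y" using der unfolding is_sigma_derivation_def by blast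
lemma s_0[simp]: "\<sigma> 0 = 0" using s_add[of 0 0] by simp
lemma d_0[simp]: "\<delta> 0 = 0" using d_add[of 0 0] by simp
lemma s_uminus: "\<sigma> (- x) = - \<sigma> x"
proof -
  have "\<sigma> x + \<sigma> (- x) = 0" using s_add[of x "-x"] by simp
  then have "- \<sigma> x = \<sigma> (- x)" by (rule minus_unique)
  then show ?thesis by simp
qed
lemma d_uminus: "\<delta> (- x) = - \<delta> x"
proof -
  have "\<delta> x + \<delta> (- x) = 0" using d_add[of x "-x"] by simp
  then have "- \<delta> x = \<delta> (- x)" by (rule minus_unique)
  then show ?thesis by simp
qed
lemma s_diff: "\<sigma> (x - y) = \<sigma> x - \<sigma> y" using s_add[of x "-y"] s_uminus by simp
lemma d_diff: "\<delta> (x - y) = \<delta> x - \<delta> y" using d_add[of x "-y"] d_uminus by simp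
lemma s_nz: "x \<noteq> 0 \<Longrightarrow> \<sigma> x \<noteq> 0"
proof
  assume "x \<noteq> 0" "\<sigma> x = 0"
  then have "\<sigma> x * \<sigma> (inverse x) = 0" by simp
  then have "\<sigma> (x * inverse x) = 0" by (simp only: s_mult)
  with \<open>x \<noteq> 0\<close> show False by simp
qed
lemma s_eq0_iff[simp]: "\<sigma> x = 0 \<longleftrightarrow> x = 0" using s_nz[of x] by auto
lemma s_inverse: "\<sigma> (inverse x) = inverse (\<sigma> x)"
proof (cases "x = 0")
  case False
  have "\<sigma> x * \<sigma> (inverse x) = 1" using False by (simp flip: s_mult)
  then have "inverse (\<sigma> x) = \<sigma> (inverse x)" by (rule inverse_unique)
  then show ?thesis by simp
qed simp
lemma spow_nz: "x \<noteq> 0 \<Longrightarrow> (\<sigma> ^^ k) x \<noteq> 0"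
  by (induction k) auto

abbreviation X where "X \<equiv> xmul \<sigma> \<delta>"
abbreviation mul where "mul \<equiv> skew_mult \<sigma> \<delta>"

lemma coeff_X: "coeff (X p) k = (if k = 0 then 0 else \<sigma> (coeff p (k - 1))) + \<delta> (coeff p k)"
  unfolding xmul_def coeff_add by (cases k) (simp_all add: coeff_map_poly)

lemma X_add: "X (p + q) = X p + X q"
  by (rule poly_eqI) (simp add: coeff_X s_add d_add algebra_simps)
lemma X_0[simp]: "X 0 = 0"
  by (rule poly_eqI) (simp add: coeff_X)
lemma X_uminus: "X (- p) = - X p"
  by (rule poly_eqI) (simp add: coeff_X s_uminus d_uminus)
lemma X_diff: "X (p - q) = X p - X q"
  by (rule poly_eqI) (simp add: coeff_X s_diff d_diff)
lemma X_cmul: "X (cmul c p) = cmul (\<sigma> c) (X p) + cmul (\<delta> c) p"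
  by (rule poly_eqI) (simp add: coeff_X s_mult d_mult algebra_simps)
lemma Xpow_add: "(X ^^ i) (p + q) = (X ^^ i) p + (X ^^ i) q"
  by (induction i) (auto simp: X_add)
lemma Xpow_0[simp]: "(X ^^ i) 0 = 0"
  by (induction i) auto
lemma Xpow_sum: "(X ^^ i) (sum f A) = (\<Sum>j\<in>A. (X ^^ i) (f j))"
  by (induction A rule: infinite_finite_induct) (auto simp: Xpow_add)
lemma X_sum: "X (sum f A) = (\<Sum>j\<in>A. X (f j))"
  using Xpow_sum[of 1] by simp

lemma mul_def': "degree F < N \<Longrightarrow> mul F G = (\<Sum>i<N. cmul (coeff F i) ((X ^^ i) G))"
proof -
  assume N: "degree F < N"
  have "mul F G = (\<Sum>i\<le>degree F. cmul (coeff F i) ((X ^^ i) G))"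
    unfolding skew_mult_def cmul_def ..
  also have "\<dots> = (\<Sum>i<N. cmul (coeff F i) ((X ^^ i) G))"
  proof (rule sum.mono_neutral_left)
    show "{..degree F} \<subseteq> {..<N}" using N by auto
    show "\<forall>i\<in>{..<N} - {..degree F}. cmul (coeff F i) ((X ^^ i) G) = 0"
      by (auto simp: coeff_eq_0)
  qed simp
  finally show ?thesis .
qed

lemma mul_add1: "mul (F + F') G = mul F G + mul F' G"
proof -
  let ?N = "Suc (max (degree F) (degree F'))"
  have "degree (F + F') < ?N" using degree_add_le_max[of F F'] by simp
  then show ?thesis
    by (simp add: mul_def'[of _ ?N] sum.distrib cmul_add2 del: sum.lessThan_Suc)
qed

lemma mul_add2: "mul F (G + G') = mul F G + mul F G'"
  by (simp add: mul_def'[of _ "Suc (degree F)"] sum.distrib cmul_add Xpow_add del: sum.lessThan_Suc)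

lemma mul_0_1[simp]: "mul 0 G = 0" by (simp add: skew_mult_def)
lemma mul_0_2[simp]: "mul F 0 = 0" by (simp add: skew_mult_def)
lemma mul_const[simp]: "mul [:c:] G = cmul c G" by (simp add: skew_mult_def cmul_def)
lemma mul_1[simp]: "mul [:1:] G = G" by simp

lemma mul_uminus1: "mul (- F) G = - mul F G"
  using mul_add1[of F "-F" G] by (metis minus_unique add.right_inverse mul_0_1)
lemma mul_uminus2: "mul F (- G) = - mul F G"
  using mul_add2[of F G "-G"] by (metis minus_unique add.right_inverse mul_0_2)
lemma mul_diff1: "mul (F - F') G = mul F G - mul F' G"
  using mul_add1[of F "-F'" G] mul_uminus1 by simp
lemma mul_diff2: "mul F (G - G') = mul F G - mul F G'"
  using mul_add2[of F G "-G'"] mul_uminus2 by simp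

lemma mul_sum1: "mul (sum f A) G = (\<Sum>i\<in>A. mul (f i) G)"
  by (induction A rule: infinite_finite_induct) (auto simp: mul_add1)

lemma mul_cmul1: "mul (cmul c F) G = cmul c (mul F G)"
proof -
  have "degree (cmul c F) < Suc (degree F)"
    using degree_cmul_le le_imp_less_Suc by blast
  then show ?thesis
    by (simp add: mul_def'[of _ "Suc (degree F)"] cmul_sum cmul_cmul del: sum.lessThan_Suc)
qed

lemma mul_pCons0: "mul (pCons 0 H) G = mul H (X G)"
proof -
  let ?N = "Suc (degree H)"
  have d: "degree (pCons 0 H) < Suc ?N" by (simp add: degree_pCons_le le_imp_less_Suc)
  have "mul (pCons 0 H) G = (\<Sum>i<Suc ?N. cmul (coeff (pCons 0 H) i) ((X ^^ i) G))"
    using d by (rule mul_def')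
  also have "\<dots> = (\<Sum>i<?N. cmul (coeff H i) ((X ^^ Suc i) G))"
    by (subst sum.lessThan_Suc_shift) simp
  also have "\<dots> = mul H (X G)"
    by (simp add: mul_def'[of H ?N] funpow_Suc_right del: funpow.simps)
  finally show ?thesis .
qed

lemma mul_map1: "f 0 = 0 \<Longrightarrow> mul (map_poly f H) G = (\<Sum>i<Suc (degree H). cmul (f (coeff H i)) ((X ^^ i) G))"
proof -
  assume f: "f 0 = 0"
  have d: "degree (map_poly f H) < Suc (degree H)" using degree_map_poly_le'[of f, OF f] by (simp add: le_imp_less_Suc)
  then show ?thesis by (simp add: mul_def'[OF d] coeff_map_poly f del: sum.lessThan_Suc)
qed

lemma X_mul: "X (mul F G) = mul (X F) G"
proof -
  let ?N = "Suc (degree F)"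
  have "X (mul F G) = (\<Sum>i<?N. X (cmul (coeff F i) ((X ^^ i) G)))"
    by (simp add: mul_def'[of F ?N] X_sum del: sum.lessThan_Suc)
  also have "\<dots> = (\<Sum>i<?N. cmul (\<sigma> (coeff F i)) ((X ^^ Suc i) G)) + (\<Sum>i<?N. cmul (\<delta> (coeff F i)) ((X ^^ i) G))"
    by (simp add: X_cmul sum.distrib del: sum.lessThan_Suc)
  also have "(\<Sum>i<?N. cmul (\<sigma> (coeff F i)) ((X ^^ Suc i) G)) = mul (map_poly \<sigma> F) (X G)"
    by (simp add: mul_map1 funpow_Suc_right del: funpow.simps sum.lessThan_Suc)
  also have "(\<Sum>i<?N. cmul (\<delta> (coeff F i)) ((X ^^ i) G)) = mul (map_poly \<delta> F) G"
    by (simp add: mul_map1 del: sum.lessThan_Suc)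
  also have "mul (map_poly \<sigma> F) (X G) + mul (map_poly \<delta> F) G = mul (X F) G"
    by (simp add: xmul_def mul_add1 mul_pCons0)
  finally show ?thesis .
qed

lemma Xpow_mul: "(X ^^ k) (mul F G) = mul ((X ^^ k) F) G"
  by (induction k) (auto simp: X_mul)

lemma mul_assoc: "mul (mul F G) H = mul F (mul G H)"
proof -
  have "mul (mul F G) H = (\<Sum>i\<le>degree F. mul (cmul (coeff F i) ((X ^^ i) G)) H)"
    unfolding skew_mult_def[of _ _ F G] by (simp add: mul_sum1 cmul_def)
  also have "\<dots> = (\<Sum>i\<le>degree F. cmul (coeff F i) ((X ^^ i) (mul G H)))"
    by (simp add: mul_cmul1 Xpow_mul)
  also have "\<dots> = mul F (mul G H)"
    unfolding skew_mult_def[of _ _ F "mul G H"] by (simp add: cmul_def)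
  finally show ?thesis .
qed

end



lemma cmul_const[simp]: "cmul c [:g:] = [:c * g:]"
  by (rule poly_eqI) (simp add: coeff_pCons split: nat.split)

lemma cmul_pCons[simp]: "cmul c (pCons a p) = pCons (c * a) (cmul c p)"
  by (rule poly_eqI) (simp add: coeff_pCons split: nat.split)

lemma degree_lt_of_coeffs: "p \<noteq> 0 \<Longrightarrow> (\<And>n. n \<ge> N \<Longrightarrow> coeff p n = 0) \<Longrightarrow> degree p < N"
  by (metis leading_coeff_neq_0 not_le)

context skew begin

lemma X_top:
  assumes "p \<noteq> 0"
  shows "coeff (X p) (Suc (degree p)) = \<sigma> (lead_coeff p)"
    and "\<And>n. n > Suc (degree p) \<Longrightarrow> coeff (X p) n = 0"
proof -
  show "coeff (X p) (Suc (degree p)) = \<sigma> (lead_coeff p)"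
    by (simp add: coeff_X coeff_eq_0)
  fix n assume "n > Suc (degree p)"
  then show "coeff (X p) n = 0" by (simp add: coeff_X coeff_eq_0)
qed

lemma X_degree: "p \<noteq> 0 \<Longrightarrow> degree (X p) = Suc (degree p) \<and> lead_coeff (X p) = \<sigma> (lead_coeff p)"
proof -
  assume p: "p \<noteq> 0"
  have c: "coeff (X p) (Suc (degree p)) \<noteq> 0" using X_top(1)[OF p] p by simp
  have "degree (X p) \<le> Suc (degree p)"
    by (rule degree_le) (use X_top(2)[OF p] in auto)
  moreover have "Suc (degree p) \<le> degree (X p)" using c by (rule le_degree)
  ultimately have "degree (X p) = Suc (degree p)" by simp
  then show ?thesis using X_top(1)[OF p] by simp
qed

lemma Xpow_degree: "p \<noteq> 0 \<Longrightarrow> (X ^^ i) p \<noteq> 0 \<and> degree ((X ^^ i) p) = degree p + i \<and> lead_coeff ((X ^^ i) p) = (\<sigma> ^^ i) (lead_coeff p)"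
proof (induction i)
  case 0 then show ?case by simp
next
  case (Suc i)
  then have nz: "(X ^^ i) p \<noteq> 0" by simp
  from X_degree[OF nz] Suc show ?case by auto
qed

lemma coeff_mul: "coeff (mul F G) n = (\<Sum>i\<le>degree F. coeff F i * coeff ((X ^^ i) G) n)"
  unfolding skew_mult_def by (simp add: coeff_sum coeff_map_poly)

lemma mul_top:
  assumes F: "F \<noteq> 0" and G: "G \<noteq> 0"
  shows "coeff (mul F G) (degree F + degree G) = lead_coeff F * (\<sigma> ^^ degree F) (lead_coeff G)"
    and "\<And>n. n > degree F + degree G \<Longrightarrow> coeff (mul F G) n = 0"
proof -
  have low: "coeff ((X ^^ i) G) n = 0" if "n > degree G + i" for i n
    using Xpow_degree[OF G, of i] that coeff_eq_0 by metis
  have split: "(\<Sum>i\<le>degree F. h i) = (\<Sum>i<degree F. h i) + h (degree F)" for h :: "nat \<Rightarrow> 'a"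
    by (simp add: lessThan_Suc_atMost[symmetric])
  show "coeff (mul F G) (degree F + degree G) = lead_coeff F * (\<sigma> ^^ degree F) (lead_coeff G)"
  proof -
    have "coeff (mul F G) (degree F + degree G) = (\<Sum>i<degree F. coeff F i * coeff ((X ^^ i) G) (degree F + degree G)) + lead_coeff F * coeff ((X ^^ degree F) G) (degree F + degree G)"
      unfolding coeff_mul split ..
    also have "(\<Sum>i<degree F. coeff F i * coeff ((X ^^ i) G) (degree F + degree G)) = 0"
      by (rule sum.neutral) (auto simp: low)
    also have "coeff ((X ^^ degree F) G) (degree F + degree G) = (\<sigma> ^^ degree F) (lead_coeff G)"
      using Xpow_degree[OF G, of "degree F"] by (metis add.commute)
    finally show ?thesis by simp
  qed
  fix n assume n: "n > degree F + degree G"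
  have "coeff (mul F G) n = (\<Sum>i\<le>degree F. coeff F i * coeff ((X ^^ i) G) n)" by (rule coeff_mul)
  also have "\<dots> = 0"
    by (rule sum.neutral) (use n in \<open>auto simp: low\<close>)
  finally show "coeff (mul F G) n = 0" .
qed

lemma mul_degree:
  assumes F: "F \<noteq> 0" and G: "G \<noteq> 0"
  shows "mul F G \<noteq> 0 \<and> degree (mul F G) = degree F + degree G \<and> lead_coeff (mul F G) = lead_coeff F * (\<sigma> ^^ degree F) (lead_coeff G)"
proof -
  have c: "coeff (mul F G) (degree F + degree G) \<noteq> 0"
    using mul_top(1)[OF F G] F G spow_nz by simp
  then have nz: "mul F G \<noteq> 0" by auto
  have "degree (mul F G) \<le> degree F + degree G"
    by (rule degree_le) (use mul_top(2)[OF F G] in auto)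
  moreover have "degree F + degree G \<le> degree (mul F G)" using c by (rule le_degree)
  ultimately have d: "degree (mul F G) = degree F + degree G" by simp
  show ?thesis using nz d mul_top(1)[OF F G] by simp
qed

lemma mul_nz: "F \<noteq> 0 \<Longrightarrow> G \<noteq> 0 \<Longrightarrow> mul F G \<noteq> 0"
  using mul_degree by blast
lemma mul_eq0_iff: "mul F G = 0 \<longleftrightarrow> F = 0 \<or> G = 0"
  using mul_nz by auto
lemma degree_mul': "F \<noteq> 0 \<Longrightarrow> G \<noteq> 0 \<Longrightarrow> degree (mul F G) = degree F + degree G"
  using mul_degree by blast

lemma xminus_nz[simp]: "xminus a \<noteq> 0" by (simp add: xminus_def)
lemma degree_xminus[simp]: "degree (xminus a) = 1" by (simp add: xminus_def)
lemma lead_xminus[simp]: "lead_coeff (xminus a) = 1" by (simp add: xminus_def)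

lemma rdiv:
  assumes G: "G \<noteq> 0"
  shows "\<exists>Q R. F = mul Q G + R \<and> (R = 0 \<or> degree R < degree G)"
proof (induction "degree F" arbitrary: F rule: less_induct)
  case less
  show ?case
  proof (cases "F = 0 \<or> degree F < degree G")
    case True
    then show ?thesis by (rule_tac x=0 in exI, rule_tac x=F in exI) auto
  next
    case False
    then have F: "F \<noteq> 0" and dge: "degree G \<le> degree F" by auto
    define d where "d = degree F - degree G"
    define c where "c = lead_coeff F * inverse ((\<sigma> ^^ d) (lead_coeff G))"
    have lg: "(\<sigma> ^^ d) (lead_coeff G) \<noteq> 0" using G spow_nz by simp
    have c0: "c \<noteq> 0" using F lg by (simp add: c_def)
    define T where "T = monom c d"
    have T: "T \<noteq> 0" "degree T = d" "lead_coeff T = c" using c0 by (auto simp: T_def degree_monom_eq)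
    have TG: "degree (mul T G) = degree F" "lead_coeff (mul T G) = lead_coeff F"
      using mul_degree[OF T(1) G] T dge lg by (auto simp: d_def c_def mult.assoc)
    define F' where "F' = F - mul T G"
    show ?thesis
    proof (cases "F' = 0")
      case True
      then show ?thesis by (rule_tac x=T in exI, rule_tac x=0 in exI) (simp add: F'_def)
    next
      case False
      have "degree F' < degree F"
      proof (rule degree_lt_of_coeffs[OF False])
        fix n assume n: "degree F \<le> n"
        show "coeff F' n = 0"
        proof (cases "n = degree F")
          case True then show ?thesis using TG by (simp add: F'_def)
        next
          case False
          then have "n > degree F" using n by simp
          then show ?thesis using TG by (simp add: F'_def coeff_eq_0)
        qed
      qed
      from less(1)[OF this] obtain Q R where QR: "F' = mul Q G + R" "R = 0 \<or> degree R < degree G" by blast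
      have "F = mul (Q + T) G + R" using QR(1) by (simp add: F'_def mul_add1 algebra_simps)
      then show ?thesis using QR(2) by blast
    qed
  qed
qed

lemma degree_le_mul: "Q \<noteq> 0 \<Longrightarrow> G \<noteq> 0 \<Longrightarrow> degree G \<le> degree (mul Q G)"
  by (simp add: degree_mul')

lemma eval_char:
  assumes "F = mul Q (xminus a) + [:r:]"
  shows "skew_eval \<sigma> \<delta> F a = r"
  unfolding skew_eval_def
proof (rule the_equality)
  show "\<exists>Q. F = mul Q (xminus a) + [:r:]" using assms by blast
next
  fix r' assume "\<exists>Q. F = mul Q (xminus a) + [:r':]"
  then obtain Q' where Q': "F = mul Q' (xminus a) + [:r':]" by blast
  have eq: "mul Q (xminus a) + [:r:] = mul Q' (xminus a) + [:r':]" using assms Q' by simp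
  have "mul (Q - Q') (xminus a) = (mul Q (xminus a) + [:r:]) - (mul Q' (xminus a) + [:r':]) + ([:r':] - [:r:])"
    by (simp add: mul_diff1 algebra_simps)
  also have "\<dots> = [:r' - r:]" using eq by simp
  finally have e: "mul (Q - Q') (xminus a) = [:r' - r:]" .
  show "r' = r"
  proof (cases "Q = Q'")
    case True then show ?thesis using e by simp
  next
    case False
    then have "degree (mul (Q - Q') (xminus a)) \<ge> 1" using degree_le_mul[of "Q - Q'" "xminus a"] by simp
    then show ?thesis using e by simp
  qed
qed

lemma eval_ex: "\<exists>Q. F = mul Q (xminus a) + [:skew_eval \<sigma> \<delta> F a:]"
proof -
  obtain Q R where QR: "F = mul Q (xminus a) + R" "R = 0 \<or> degree R < 1"
    using rdiv[of "xminus a" F] by auto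
  then have "degree R = 0" by auto
  then obtain r where r: "R = [:r:]" by (meson degree_eq_zeroE)
  then have "skew_eval \<sigma> \<delta> F a = r" using QR(1) by (intro eval_char) simp
  then show ?thesis using QR(1) r by blast
qed

abbreviation ev where "ev F a \<equiv> skew_eval \<sigma> \<delta> F a"

lemma eval_zero_iff: "ev F a = 0 \<longleftrightarrow> right_dvd \<sigma> \<delta> (xminus a) F"
proof
  assume "ev F a = 0"
  then show "right_dvd \<sigma> \<delta> (xminus a) F" using eval_ex[of F a] by (auto simp: right_dvd_def)
next
  assume "right_dvd \<sigma> \<delta> (xminus a) F"
  then obtain Q where "F = mul Q (xminus a)" by (auto simp: right_dvd_def)
  then have "F = mul Q (xminus a) + [:0:]" by simp
  then show "ev F a = 0" by (rule eval_char)
qed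

lemma eval_add: "ev (F + G) a = ev F a + ev G a"
proof -
  obtain Q where Q: "F = mul Q (xminus a) + [:ev F a:]" using eval_ex by blast
  obtain Q' where Q': "G = mul Q' (xminus a) + [:ev G a:]" using eval_ex by blast
  have "F + G = mul (Q + Q') (xminus a) + [:ev F a + ev G a:]"
    by (subst Q, subst Q') (simp add: mul_add1 algebra_simps)
  then show ?thesis by (rule eval_char)
qed

lemma eval_const[simp]: "ev [:c:] a = c"
  by (rule eval_char[of _ 0]) simp

lemma eval_0[simp]: "ev 0 a = 0"
  using eval_const[of 0 a] by simp

lemma eval_xminus: "ev (xminus b) a = a - b"
  by (rule eval_char[of _ "[:1:]"]) (simp add: xminus_def)

lemma eval_sum: "ev (sum f A) a = (\<Sum>i\<in>A. ev (f i) a)"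
  by (induction A rule: infinite_finite_induct) (auto simp: eval_add)

definition cj where "cj a g = skew_conj \<sigma> \<delta> a g"

lemma xminus_conj_swap:
  assumes g: "g \<noteq> 0"
  shows "mul (xminus (cj a g)) [:g:] = mul [:\<sigma> g:] (xminus a)"
proof -
  have X1: "X [:g:] = [:\<delta> g, \<sigma> g:]"
    by (rule poly_eqI) (simp add: coeff_X coeff_pCons split: nat.split)
  have "mul (xminus (cj a g)) [:g:] = (\<Sum>i<2. cmul (coeff (xminus (cj a g)) i) ((X ^^ i) [:g:]))"
    by (rule mul_def') simp
  also have "\<dots> = [:- cj a g * g:] + [:\<delta> g, \<sigma> g:]"
    by (simp add: numeral_2_eq_2 xminus_def X1)
  also have "- cj a g * g = - (\<sigma> g * a) - \<delta> g"
    using g by (simp add: cj_def skew_conj_def algebra_simps)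
  finally show ?thesis by (simp add: xminus_def)
qed

lemma eval_mul: "ev (mul F G) a = (if ev G a = 0 then 0 else ev F (cj a (ev G a)) * ev G a)"
proof -
  define g where "g = ev G a"
  obtain Q where Q: "G = mul Q (xminus a) + [:g:]" using eval_ex g_def by blast
  have FG: "mul F G = mul (mul F Q) (xminus a) + mul F [:g:]"
    by (subst Q) (simp add: mul_add2 mul_assoc)
  show ?thesis
  proof (cases "g = 0")
    case True
    then have "mul F G = mul (mul F Q) (xminus a) + [:0:]" using FG by simp
    then show ?thesis using True g_def eval_char by metis
  next
    case False
    define b where "b = cj a g"
    obtain Q' where Q': "F = mul Q' (xminus b) + [:ev F b:]" using eval_ex by blast
    have "mul F [:g:] = mul Q' (mul (xminus b) [:g:]) + [:ev F b * g:]"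
      by (subst Q') (simp add: mul_add1 mul_assoc)
    also have "\<dots> = mul (mul Q' [:\<sigma> g:]) (xminus a) + [:ev F b * g:]"
      using xminus_conj_swap[OF False] by (simp add: b_def mul_assoc)
    finally have "mul F G = mul (mul F Q + mul Q' [:\<sigma> g:]) (xminus a) + [:ev F b * g:]"
      using FG by (simp add: mul_add1 add.assoc)
    then have "ev (mul F G) a = ev F b * g" by (rule eval_char)
    then show ?thesis using False by (simp add: g_def b_def)
  qed
qed

end



definition mindeg :: "'a::zero poly set \<Rightarrow> nat" where
  "mindeg S = (LEAST d. \<exists>F\<in>S. F \<noteq> 0 \<and> degree F = d)"

lemma mindeg_ex: "\<exists>F\<in>S. F \<noteq> 0 \<Longrightarrow> \<exists>F\<in>S. F \<noteq> 0 \<and> degree F = mindeg S"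
proof -
  assume "\<exists>F\<in>S. F \<noteq> 0"
  then have "\<exists>d. \<exists>F\<in>S. F \<noteq> 0 \<and> degree F = d" by blast
  from LeastI_ex[of "\<lambda>d. \<exists>F\<in>S. F \<noteq> 0 \<and> degree F = d", OF this]
  show ?thesis unfolding mindeg_def .
qed

lemma mindeg_le: "F \<in> S \<Longrightarrow> F \<noteq> 0 \<Longrightarrow> mindeg S \<le> degree F"
proof -
  assume "F \<in> S" "F \<noteq> 0"
  then have "\<exists>G\<in>S. G \<noteq> 0 \<and> degree G = degree F" by blast
  from Least_le[of "\<lambda>d. \<exists>F\<in>S. F \<noteq> 0 \<and> degree F = d", OF this]
  show ?thesis unfolding mindeg_def .
qed

lemma mindeg_ge: "\<exists>F\<in>S. F \<noteq> 0 \<Longrightarrow> (\<And>F. F \<in> S \<Longrightarrow> F \<noteq> 0 \<Longrightarrow> k \<le> degree F) \<Longrightarrow> k \<le> mindeg S"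
proof -
  assume ex: "\<exists>F\<in>S. F \<noteq> 0" and h: "\<And>F. F \<in> S \<Longrightarrow> F \<noteq> 0 \<Longrightarrow> k \<le> degree F"
  obtain F where "F \<in> S" "F \<noteq> 0" "degree F = mindeg S" using mindeg_ex[OF ex] by blast
  then show ?thesis using h[of F] by simp
qed

lemma mindeg_mono: "S \<subseteq> T \<Longrightarrow> \<exists>F\<in>S. F \<noteq> 0 \<Longrightarrow> mindeg T \<le> mindeg S"
proof -
  assume "S \<subseteq> T" "\<exists>F\<in>S. F \<noteq> 0"
  then obtain F where "F \<in> S" "F \<noteq> 0" "degree F = mindeg S" using mindeg_ex[of S] by blast
  then show ?thesis using mindeg_le[of F T] \<open>S \<subseteq> T\<close> by auto
qed

context skew begin

abbreviation rdvd where "rdvd P F \<equiv> right_dvd \<sigma> \<delta> P F"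

definition LM where "LM A B = {F. rdvd A F \<and> rdvd B F}"
definition SM where "SM A B = {F. \<exists>U V. F = mul U A + mul V B}"

lemma rdvd_refl: "rdvd A A"
  unfolding right_dvd_def by (rule exI[of _ "[:1:]"]) simp

lemma rdvd_trans: "rdvd A B \<Longrightarrow> rdvd B C \<Longrightarrow> rdvd A C"
  unfolding right_dvd_def using mul_assoc by metis

lemma rdvd_mul: "rdvd A B \<Longrightarrow> rdvd A (mul U B)"
  unfolding right_dvd_def using mul_assoc by metis

lemma rdvd_mul_self: "rdvd A (mul U A)"
  unfolding right_dvd_def by blast

lemma rdvd_add: "rdvd A B \<Longrightarrow> rdvd A C \<Longrightarrow> rdvd A (B + C)"
  unfolding right_dvd_def using mul_add1 by metis

lemma rdvd_uminus: "rdvd A B \<Longrightarrow> rdvd A (- B)"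
  unfolding right_dvd_def using mul_uminus1 by metis

lemma rdvd_diff: "rdvd A B \<Longrightarrow> rdvd A C \<Longrightarrow> rdvd A (B - C)"
  using rdvd_add[of A B "- C"] rdvd_uminus by simp

lemma rdvd_degree: "rdvd A F \<Longrightarrow> A \<noteq> 0 \<Longrightarrow> F \<noteq> 0 \<Longrightarrow> degree A \<le> degree F"
  unfolding right_dvd_def by (metis degree_le_mul mul_0_1)

lemma SM_left: "A \<in> SM A B" unfolding SM_def by (rule CollectI, rule exI[of _ "[:1:]"], rule exI[of _ 0]) simp
lemma SM_right: "B \<in> SM A B" unfolding SM_def by (rule CollectI, rule exI[of _ 0], rule exI[of _ "[:1:]"]) simp
lemma SM_sym: "SM A B = SM B A" unfolding SM_def by auto (metis add.commute)+

lemma SM_sub: "F \<in> SM A B \<Longrightarrow> G \<in> SM A B \<Longrightarrow> mul W G \<in> SM A B \<and> F - G \<in> SM A B"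
proof -
  assume "F \<in> SM A B" "G \<in> SM A B"
  then obtain U V U' V' where F: "F = mul U A + mul V B" and G: "G = mul U' A + mul V' B"
    unfolding SM_def by blast
  have "mul W G = mul (mul W U') A + mul (mul W V') B"
    by (simp add: G mul_add2 mul_assoc)
  moreover have "F - G = mul (U - U') A + mul (V - V') B"
    by (simp add: F G mul_diff1 algebra_simps)
  ultimately show ?thesis unfolding SM_def by blast
qed

lemma SM_subset_dvd: "rdvd D A \<Longrightarrow> SM A B \<subseteq> SM D B"
proof
  fix F assume "rdvd D A" "F \<in> SM A B"
  then obtain Q U V where "A = mul Q D" "F = mul U A + mul V B" unfolding SM_def right_dvd_def by blast
  then have "F = mul (mul U Q) D + mul V B" by (simp add: mul_assoc)
  then show "F \<in> SM D B" unfolding SM_def by blast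
qed

lemma SM_min_dvd:
  assumes D: "D \<in> SM A B" "D \<noteq> 0" "degree D = mindeg (SM A B)"
  shows "rdvd D A" "rdvd D B"
proof -
  have gen: "rdvd D C" if C: "C \<in> SM A B" for C
  proof -
    obtain Q R where QR: "C = mul Q D + R" "R = 0 \<or> degree R < degree D"
      using rdiv[OF D(2)] by blast
    have "R = C - mul Q D" using QR(1) by simp
    then have R: "R \<in> SM A B" using SM_sub[OF C D(1)] SM_sub[OF C, of "mul Q D"] SM_sub[OF D(1) D(1), of Q] by auto
    have "R = 0"
    proof (rule ccontr)
      assume "R \<noteq> 0"
      then have "mindeg (SM A B) \<le> degree R" using R mindeg_le by blast
      then show False using QR(2) D(3) \<open>R \<noteq> 0\<close> by simp
    qed
    then show ?thesis using QR(1) unfolding right_dvd_def by auto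
  qed
  show "rdvd D A" by (rule gen[OF SM_left])
  show "rdvd D B" by (rule gen[OF SM_right])
qed

lemma ore:
  assumes "A \<noteq> 0" "B \<noteq> 0"
  shows "(\<exists>F\<in>LM A B. F \<noteq> 0) \<and> mindeg (LM A B) + mindeg (SM A B) = degree A + degree B"
  using assms
proof (induction "degree B" arbitrary: A B rule: less_induct)
  case less
  note A = less.prems(1) and B = less.prems(2)
  obtain Q R where QR: "A = mul Q B + R" "R = 0 \<or> degree R < degree B"
    using rdiv[OF B] by blast
  show ?case
  proof (cases "R = 0")
    case True
    then have AQ: "A = mul Q B" using QR by simp
    have LMeq: "LM A B = {F. rdvd A F}"
      unfolding LM_def using rdvd_trans[of B A] AQ rdvd_mul_self by blast
    have A_in: "A \<in> LM A B" using LMeq rdvd_refl by blast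
    have m1: "mindeg (LM A B) = degree A"
    proof (rule antisym)
      show "mindeg (LM A B) \<le> degree A" using mindeg_le[OF A_in A] .
      show "degree A \<le> mindeg (LM A B)"
        by (rule mindeg_ge) (use A_in A LMeq rdvd_degree A in auto)
    qed
    have m2: "mindeg (SM A B) = degree B"
    proof (rule antisym)
      show "mindeg (SM A B) \<le> degree B" using mindeg_le[OF SM_right B] .
      have "rdvd B F" if "F \<in> SM A B" for F
        using that unfolding SM_def AQ by (auto intro!: rdvd_add rdvd_mul rdvd_mul_self)
      then show "degree B \<le> mindeg (SM A B)"
        by (intro mindeg_ge) (use SM_right B rdvd_degree B in auto)
    qed
    show ?thesis using A_in A m1 m2 by auto
  next
    case False
    then have Rlt: "degree R < degree B" using QR by simp
    from less(1)[OF Rlt B False] obtain W where W: "W \<in> LM B R" "W \<noteq> 0"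
      and eqBR: "mindeg (LM B R) + mindeg (SM B R) = degree B + degree R" by blast
    have SMeq: "SM A B = SM B R"
    proof
      show "SM A B \<subseteq> SM B R"
      proof
        fix F assume "F \<in> SM A B"
        then obtain U V where F: "F = mul U A + mul V B" unfolding SM_def by blast
        have "F = mul (mul U Q + V) B + mul U R"
          by (simp add: F QR(1) mul_add1 mul_add2 mul_assoc algebra_simps)
        then show "F \<in> SM B R" unfolding SM_def by blast
      qed
      show "SM B R \<subseteq> SM A B"
      proof
        fix F assume "F \<in> SM B R"
        then obtain U V where F: "F = mul U B + mul V R" unfolding SM_def by blast
        have Req: "R = A - mul Q B" using QR(1) by simp
        have "F = mul V A + mul (U - mul V Q) B"
          by (simp add: F Req mul_diff1 mul_diff2 mul_assoc algebra_simps)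
        then show "F \<in> SM A B" unfolding SM_def by blast
      qed
    qed
    obtain W0 where W0: "W0 \<in> LM B R" "W0 \<noteq> 0" "degree W0 = mindeg (LM B R)"
      using mindeg_ex W by blast
    obtain U V where UV: "W0 = mul U R" "W0 = mul V B" using W0(1) unfolding LM_def right_dvd_def by blast
    have U0: "U \<noteq> 0" using UV W0(2) by auto
    have "mul U A = mul (mul U Q + V) B"
      by (simp add: QR(1) mul_add1 mul_add2 mul_assoc UV(1)[symmetric] UV(2)[symmetric])
    then have UA: "mul U A \<in> LM A B" unfolding LM_def right_dvd_def by blast
    have UAnz: "mul U A \<noteq> 0" using mul_nz[OF U0 A] .
    have dW0: "degree W0 = degree U + degree R" using UV(1) degree_mul'[OF U0 False] by simp
    have le1: "mindeg (LM A B) + degree R \<le> mindeg (LM B R) + degree A"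
      using mindeg_le[OF UA UAnz] degree_mul'[OF U0 A] dW0 W0(3) by simp
    obtain Z where Z: "Z \<in> LM A B" "Z \<noteq> 0" "degree Z = mindeg (LM A B)"
      using mindeg_ex UA UAnz by blast
    obtain S T where ST: "Z = mul S A" "Z = mul T B" using Z(1) unfolding LM_def right_dvd_def by blast
    have S0: "S \<noteq> 0" using ST Z(2) by auto
    have "mul S R = mul S A - mul (mul S Q) B"
      by (simp add: QR(1) mul_add2 mul_assoc)
    also have "\<dots> = mul (T - mul S Q) B" using ST by (simp add: mul_diff1)
    finally have SR: "mul S R \<in> LM B R" unfolding LM_def right_dvd_def by blast
    have SRnz: "mul S R \<noteq> 0" using mul_nz[OF S0 False] .
    have le2: "mindeg (LM B R) + degree A \<le> mindeg (LM A B) + degree R"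
      using mindeg_le[OF SR SRnz] degree_mul'[OF S0 False] degree_mul'[OF S0 A] ST(1) Z(3) by simp
    show ?thesis using UA UAnz le1 le2 eqBR SMeq by auto
  qed
qed

lemma I_closed:
  shows "0 \<in> I_ideal \<sigma> \<delta> \<Omega>"
    and "F \<in> I_ideal \<sigma> \<delta> \<Omega> \<Longrightarrow> mul U F \<in> I_ideal \<sigma> \<delta> \<Omega>"
    and "F \<in> I_ideal \<sigma> \<delta> \<Omega> \<Longrightarrow> G \<in> I_ideal \<sigma> \<delta> \<Omega> \<Longrightarrow> F - G \<in> I_ideal \<sigma> \<delta> \<Omega>"
proof -
  show "0 \<in> I_ideal \<sigma> \<delta> \<Omega>" unfolding I_ideal_def right_dvd_def by (auto intro: exI[of _ 0])
  show "F \<in> I_ideal \<sigma> \<delta> \<Omega> \<Longrightarrow> mul U F \<in> I_ideal \<sigma> \<delta> \<Omega>" unfolding I_ideal_def by (auto intro: rdvd_mul)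
  show "F \<in> I_ideal \<sigma> \<delta> \<Omega> \<Longrightarrow> G \<in> I_ideal \<sigma> \<delta> \<Omega> \<Longrightarrow> F - G \<in> I_ideal \<sigma> \<delta> \<Omega>"
    unfolding I_ideal_def by (auto intro: rdvd_diff)
qed

lemma degree_cmul: "c \<noteq> 0 \<Longrightarrow> (p::'a poly) \<noteq> 0 \<Longrightarrow> degree (cmul c p) = degree p \<and> lead_coeff (cmul c p) = c * lead_coeff p"
proof -
  assume c: "c \<noteq> 0" and p: "p \<noteq> 0"
  have "[:c:] \<noteq> 0" using c by simp
  from mul_degree[OF this p] show ?thesis by simp
qed

lemma Fgen:
  assumes "I_ideal \<sigma> \<delta> \<Omega> \<noteq> {0}"
  shows "F_gen \<sigma> \<delta> \<Omega> \<in> I_ideal \<sigma> \<delta> \<Omega>" "lead_coeff (F_gen \<sigma> \<delta> \<Omega>) = 1"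
    "F_gen \<sigma> \<delta> \<Omega> \<noteq> 0"
    "degree (F_gen \<sigma> \<delta> \<Omega>) = mindeg (I_ideal \<sigma> \<delta> \<Omega>)"
    "\<And>G. G \<in> I_ideal \<sigma> \<delta> \<Omega> \<longleftrightarrow> rdvd (F_gen \<sigma> \<delta> \<Omega>) G"
proof -
  let ?I = "I_ideal \<sigma> \<delta> \<Omega>"
  have ex: "\<exists>F\<in>?I. F \<noteq> 0" using assms I_closed(1) by blast
  obtain F0 where F0: "F0 \<in> ?I" "F0 \<noteq> 0" "degree F0 = mindeg ?I" using mindeg_ex[OF ex] by blast
  define c where "c = inverse (lead_coeff F0)"
  have c0: "c \<noteq> 0" using F0(2) by (simp add: c_def)
  have m1: "cmul c F0 \<in> ?I" using I_closed(2)[OF F0(1), where U="[:c:]"] by simp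
  have lc: "lead_coeff F0 \<noteq> 0" using F0(2) by simp
  have m2: "lead_coeff (cmul c F0) = 1"
    using degree_cmul[OF c0 F0(2)] lc by (simp add: c_def)
  have m3: "degree (cmul c F0) = mindeg ?I"
    using degree_cmul[OF c0 F0(2)] F0(3) by simp
  have m4: "\<forall>G\<in>?I. G \<noteq> 0 \<longrightarrow> mindeg ?I \<le> degree G" using mindeg_le by blast
  have "\<exists>F. F \<in> ?I \<and> lead_coeff F = 1 \<and> (\<forall>G\<in>?I. G \<noteq> 0 \<longrightarrow> degree F \<le> degree G)"
    by (rule exI[of _ "cmul c F0"]) (use m1 m2 m3 m4 in simp)
  from someI_ex[OF this] have P: "F_gen \<sigma> \<delta> \<Omega> \<in> ?I" "lead_coeff (F_gen \<sigma> \<delta> \<Omega>) = 1"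
      "\<forall>G\<in>?I. G \<noteq> 0 \<longrightarrow> degree (F_gen \<sigma> \<delta> \<Omega>) \<le> degree G"
    unfolding F_gen_def using assms by auto
  show "F_gen \<sigma> \<delta> \<Omega> \<in> ?I" "lead_coeff (F_gen \<sigma> \<delta> \<Omega>) = 1" using P by auto
  show nz: "F_gen \<sigma> \<delta> \<Omega> \<noteq> 0" using P(2) by auto
  show dg: "degree (F_gen \<sigma> \<delta> \<Omega>) = mindeg ?I"
    using P(3) F0 mindeg_le[OF P(1) nz] by force
  fix G
  show "G \<in> ?I \<longleftrightarrow> rdvd (F_gen \<sigma> \<delta> \<Omega>) G"
  proof
    assume G: "G \<in> ?I"
    obtain Q R where QR: "G = mul Q (F_gen \<sigma> \<delta> \<Omega>) + R" "R = 0 \<or> degree R < degree (F_gen \<sigma> \<delta> \<Omega>)"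
      using rdiv[OF nz] by blast
    have "R = G - mul Q (F_gen \<sigma> \<delta> \<Omega>)" using QR by simp
    then have R: "R \<in> ?I" using I_closed(3)[OF G I_closed(2)[OF P(1)]] by simp
    have "R = 0" using QR(2) R P(3) by force
    then show "rdvd (F_gen \<sigma> \<delta> \<Omega>) G" using QR unfolding right_dvd_def by auto
  next
    assume "rdvd (F_gen \<sigma> \<delta> \<Omega>) G"
    then show "G \<in> ?I" using P(1) I_closed(2) unfolding right_dvd_def by auto
  qed
qed

lemma I_nonzero_iff: "I_ideal \<sigma> \<delta> \<Omega> \<noteq> {0} \<longleftrightarrow> (\<exists>F\<in>I_ideal \<sigma> \<delta> \<Omega>. F \<noteq> 0)"
  using I_closed(1) by blast

lemma I_insert_LM:
  assumes "I_ideal \<sigma> \<delta> \<Omega> \<noteq> {0}"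
  shows "I_ideal \<sigma> \<delta> (insert P \<Omega>) = LM (F_gen \<sigma> \<delta> \<Omega>) P"
  unfolding LM_def using Fgen(5)[OF assms] unfolding I_ideal_def by auto

lemma fin_I:
  assumes "finite \<Omega>" "\<forall>P\<in>\<Omega>. P \<noteq> 0"
  shows "I_ideal \<sigma> \<delta> \<Omega> \<noteq> {0} \<and> mindeg (I_ideal \<sigma> \<delta> \<Omega>) \<le> (\<Sum>P\<in>\<Omega>. degree P)"
  using assms
proof (induction \<Omega> rule: finite_induct)
  case empty
  have "[:1:] \<in> I_ideal \<sigma> \<delta> {}" by (simp add: I_ideal_def)
  then show ?case using mindeg_le[of "[:1:]" "I_ideal \<sigma> \<delta> {}"] by auto
next
  case (insert P \<Omega>)
  then have IH: "I_ideal \<sigma> \<delta> \<Omega> \<noteq> {0}" "mindeg (I_ideal \<sigma> \<delta> \<Omega>) \<le> (\<Sum>P\<in>\<Omega>. degree P)" and P0: "P \<noteq> 0"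
    by auto
  note o = ore[OF Fgen(3)[OF IH(1)] P0]
  have "I_ideal \<sigma> \<delta> (insert P \<Omega>) = LM (F_gen \<sigma> \<delta> \<Omega>) P" by (rule I_insert_LM[OF IH(1)])
  then show ?case using o IH(2) Fgen(4)[OF IH(1)] insert.hyps I_nonzero_iff by auto
qed

lemma P_indep_iff:
  assumes "finite \<Omega>" "\<forall>P\<in>\<Omega>. P \<noteq> 0"
  shows "P_indep \<sigma> \<delta> \<Omega> \<longleftrightarrow> mindeg (I_ideal \<sigma> \<delta> \<Omega>) = (\<Sum>P\<in>\<Omega>. degree P)"
  using fin_I[OF assms] Fgen(4) assms(1) unfolding P_indep_def by auto

lemma insert_indep:
  assumes "finite \<Omega>" "\<forall>P\<in>\<Omega>. P \<noteq> 0" "P \<noteq> 0" "P \<notin> \<Omega>"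
  shows "P_indep \<sigma> \<delta> (insert P \<Omega>) \<longleftrightarrow> P_indep \<sigma> \<delta> \<Omega> \<and> mindeg (SM (F_gen \<sigma> \<delta> \<Omega>) P) = 0"
proof -
  note f = fin_I[OF assms(1,2)]
  have I: "I_ideal \<sigma> \<delta> (insert P \<Omega>) = LM (F_gen \<sigma> \<delta> \<Omega>) P" by (rule I_insert_LM) (use f in auto)
  note o = ore[OF Fgen(3) assms(3), OF conjunct1[OF f]]
  have d: "degree (F_gen \<sigma> \<delta> \<Omega>) = mindeg (I_ideal \<sigma> \<delta> \<Omega>)" using Fgen(4) f by blast
  have s: "(\<Sum>Q\<in>insert P \<Omega>. degree Q) = degree P + (\<Sum>Q\<in>\<Omega>. degree Q)" using assms(1,4) by simp
  have e1: "P_indep \<sigma> \<delta> (insert P \<Omega>) \<longleftrightarrow> mindeg (LM (F_gen \<sigma> \<delta> \<Omega>) P) = degree P + (\<Sum>Q\<in>\<Omega>. degree Q)"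
    using P_indep_iff[of "insert P \<Omega>"] assms I s by simp
  have e2: "P_indep \<sigma> \<delta> \<Omega> \<longleftrightarrow> mindeg (I_ideal \<sigma> \<delta> \<Omega>) = (\<Sum>Q\<in>\<Omega>. degree Q)"
    using P_indep_iff[OF assms(1,2)] .
  have e3: "mindeg (LM (F_gen \<sigma> \<delta> \<Omega>) P) + mindeg (SM (F_gen \<sigma> \<delta> \<Omega>) P) = mindeg (I_ideal \<sigma> \<delta> \<Omega>) + degree P"
    using o d by simp
  have le: "mindeg (I_ideal \<sigma> \<delta> \<Omega>) \<le> (\<Sum>Q\<in>\<Omega>. degree Q)" using f by blast
  show ?thesis unfolding e1 e2 using e3 le by (intro iffI) auto
qed

lemma SM_xminus:
  assumes "rdvd (xminus e) A" "rdvd (xminus e) B" "A \<noteq> 0"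
  shows "mindeg (SM A B) \<noteq> 0"
proof -
  have "rdvd (xminus e) F" if "F \<in> SM A B" for F
    using that assms unfolding SM_def by (auto intro: rdvd_add rdvd_mul)
  then have "1 \<le> mindeg (SM A B)"
    by (intro mindeg_ge) (use SM_left assms(3) rdvd_degree in fastforce)+
  then show ?thesis by simp
qed

lemma linear_factor:
  assumes "degree D = 1"
  shows "\<exists>e. D = mul [:lead_coeff D:] (xminus e)"
proof -
  define d1 where "d1 = lead_coeff D"
  have "D \<noteq> 0" using assms by auto
  then have d1: "d1 \<noteq> 0" by (simp add: d1_def)
  have c1: "coeff D 1 = d1" using assms by (simp add: d1_def)
  define e where "e = - (inverse d1 * coeff D 0)"
  have "D = cmul d1 (xminus e)"
  proof (rule poly_eqI)
    fix n show "coeff D n = coeff (cmul d1 (xminus e)) n"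
      using d1 c1 assms by (cases n) (auto simp: xminus_def e_def coeff_pCons coeff_eq_0 mult.assoc[symmetric] split: nat.split)
  qed
  then show ?thesis by (auto simp: d1_def)
qed

lemma mstep:
  assumes G: "G \<noteq> 0" and P': "P' \<noteq> 0" and P: "P = mul (xminus c) P'"
    and uniq: "\<And>b. ev P b = 0 \<Longrightarrow> b = e" and e: "ev P' e = 0"
  shows "mindeg (SM G P) = 0 \<longleftrightarrow> mindeg (SM G P') = 0"
proof
  have sub: "SM G P \<subseteq> SM G P'"
  proof
    fix F assume "F \<in> SM G P"
    then obtain U V where "F = mul U G + mul V P" unfolding SM_def by blast
    then have "F = mul U G + mul (mul V (xminus c)) P'" by (simp add: P mul_assoc)
    then show "F \<in> SM G P'" unfolding SM_def by blast
  qed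
  have ex: "\<exists>F\<in>SM G P. F \<noteq> 0" using SM_left G by blast
  assume "mindeg (SM G P) = 0"
  then show "mindeg (SM G P') = 0" using mindeg_mono[OF sub ex] by simp
next
  assume m0: "mindeg (SM G P') = 0"
  show "mindeg (SM G P) = 0"
  proof (rule ccontr)
    assume dpos: "mindeg (SM G P) \<noteq> 0"
    have ex: "\<exists>F\<in>SM G P. F \<noteq> 0" using SM_left G by blast
    obtain D where D: "D \<in> SM G P" "D \<noteq> 0" "degree D = mindeg (SM G P)"
      using mindeg_ex[OF ex] by blast
    have dG: "rdvd D G" and dP: "rdvd D P" using SM_min_dvd[OF D] by auto
    have ex': "\<exists>F\<in>SM G P'. F \<noteq> 0" using SM_left G by blast
    have "mindeg (SM D P') \<le> mindeg (SM G P')"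
      by (rule mindeg_mono[OF SM_subset_dvd[OF dG] ex'])
    then have m0': "mindeg (SM D P') = 0" using m0 by simp
    then have LMd: "mindeg (LM D P') = degree D + degree P'" using ore[OF D(2) P'] by simp
    have Pnz: "P \<noteq> 0" using P P' mul_nz by simp
    have dPdeg: "degree P = 1 + degree P'" using P degree_mul'[OF xminus_nz P'] by simp
    have PLM: "P \<in> LM D P'" unfolding LM_def using dP P rdvd_mul_self by auto
    have "mindeg (LM D P') \<le> degree P" by (rule mindeg_le[OF PLM Pnz])
    then have "degree D \<le> 1" using LMd dPdeg by simp
    then have D1: "degree D = 1" using dpos D(3) by simp
    obtain e' where e': "D = mul [:lead_coeff D:] (xminus e')" using linear_factor[OF D1] by blast
    have de': "rdvd (xminus e') D" by (subst e') (rule rdvd_mul_self)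
    then have "rdvd (xminus e') P" using dP rdvd_trans by blast
    then have "ev P e' = 0" using eval_zero_iff by blast
    then have ee: "e' = e" using uniq by blast
    have "rdvd (xminus e) P'" using e eval_zero_iff by blast
    then have "mindeg (SM D P') \<noteq> 0"
      using SM_xminus[of e D P'] de' ee D(2) by blast
    then show False using m0' by simp
  qed
qed

end



context skew begin

lemma d_1[simp]: "\<delta> 1 = 0"
proof -
  have "\<delta> (1 * 1) = \<sigma> 1 * \<delta> 1 + \<delta> 1 * 1" by (rule d_mult)
  then show ?thesis by simp
qed

lemma Xpow_one: "(X ^^ i) [:1:] = monom 1 i"
proof (induction i)
  case 0 then show ?case by (simp add: monom_0)
next
  case (Suc i)
  have "X (monom 1 i) = monom 1 (Suc i)"
    by (rule poly_eqI) (auto simp: coeff_X coeff_monom)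
  then show ?case using Suc by simp
qed

lemma mul_one_right[simp]: "mul F [:1:] = F"
proof (rule poly_eqI)
  fix n
  have "coeff (mul F [:1:]) n = (\<Sum>i\<le>degree F. coeff F i * (if i = n then 1 else 0))"
    by (simp add: coeff_mul Xpow_one coeff_monom)
  also have "\<dots> = coeff F n"
    by (cases "n \<le> degree F") (auto simp: coeff_eq_0 if_distrib cong: if_cong)
  finally show "coeff (mul F [:1:]) n = coeff F n" .
qed

abbreviation Pseq where "Pseq xs \<equiv> P_seq \<sigma> \<delta> xs"

lemma Pseq_snoc: "Pseq (xs @ [c]) = mul (xminus c) (Pseq xs)"
  by (simp add: P_seq_def)

lemma Pseq_single: "Pseq [a] = xminus a"
  by (simp add: P_seq_def)

lemma Pseq_deg: "Pseq xs \<noteq> 0 \<and> degree (Pseq xs) = length xs"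
proof (induction xs rule: rev_induct)
  case Nil then show ?case by (simp add: P_seq_def)
next
  case (snoc c xs)
  then show ?case using mul_degree[OF xminus_nz, of "Pseq xs" c] by (simp add: Pseq_snoc)
qed

lemma foldl_rdvd: "rdvd P (foldl (\<lambda>P a. mul (xminus a) P) P xs)"
proof (induction xs arbitrary: P)
  case Nil then show ?case by (simp add: rdvd_refl)
next
  case (Cons a xs)
  have "rdvd P (mul (xminus a) P)" by (rule rdvd_mul_self)
  then show ?case using Cons.IH[of "mul (xminus a) P"] rdvd_trans by simp
qed

lemma Pseq_hd: "xs \<noteq> [] \<Longrightarrow> ev (Pseq xs) (hd xs) = 0"
proof -
  assume "xs \<noteq> []"
  then obtain a ys where xs: "xs = a # ys" by (cases xs) auto
  have "Pseq xs = foldl (\<lambda>P a. mul (xminus a) P) (xminus a) ys"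
    by (simp add: xs P_seq_def)
  then have "rdvd (xminus a) (Pseq xs)" using foldl_rdvd by simp
  then show ?thesis using xs eval_zero_iff by simp
qed

lemma mult_seq_zero: "mult_seq \<sigma> \<delta> xs \<Longrightarrow> ev (Pseq xs) b = 0 \<longleftrightarrow> b = hd xs"
  unfolding mult_seq_def by blast

lemma mult_seq_butlast:
  assumes m: "mult_seq \<sigma> \<delta> xs" and l: "length xs \<ge> 2"
  shows "mult_seq \<sigma> \<delta> (butlast xs)" "hd (butlast xs) = hd xs"
    "Pseq xs = mul (xminus (last xs)) (Pseq (butlast xs))"
proof -
  have ne: "xs \<noteq> []" "butlast xs \<noteq> []" using l by (cases xs; auto)+
  have xs: "xs = butlast xs @ [last xs]" using ne by simp
  show P: "Pseq xs = mul (xminus (last xs)) (Pseq (butlast xs))"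
    by (subst xs) (rule Pseq_snoc)
  obtain a b ys where abys: "xs = a # b # ys" using l by (cases xs; cases "tl xs") auto
  show hd: "hd (butlast xs) = hd xs" by (simp add: abys)
  have "{b. ev (Pseq (butlast xs)) b = 0} = {hd xs}"
  proof
    show "{b. ev (Pseq (butlast xs)) b = 0} \<subseteq> {hd xs}"
    proof
      fix b assume "b \<in> {b. ev (Pseq (butlast xs)) b = 0}"
      then have "ev (Pseq xs) b = 0" by (simp add: P eval_mul)
      then show "b \<in> {hd xs}" using mult_seq_zero[OF m] by simp
    qed
    show "{hd xs} \<subseteq> {b. ev (Pseq (butlast xs)) b = 0}"
      using Pseq_hd[OF ne(2)] hd by simp
  qed
  then show "mult_seq \<sigma> \<delta> (butlast xs)" unfolding mult_seq_def using ne hd by simp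
qed

lemma multi:
  fixes as :: "nat \<Rightarrow> 'a list"
  assumes "finite S" "\<forall>i\<in>S. mult_seq \<sigma> \<delta> (as i)" "inj_on (\<lambda>i. hd (as i)) S"
  shows "P_indep \<sigma> \<delta> ((\<lambda>i. Pseq (as i)) ` S) \<longleftrightarrow> P_indep \<sigma> \<delta> (xminus ` (\<lambda>i. hd (as i)) ` S)"
  using assms
proof (induction "\<Sum>i\<in>S. length (as i)" arbitrary: as rule: less_induct)
  case less
  note fin = less.prems(1) and ms = less.prems(2) and inj = less.prems(3)
  have ne: "as i \<noteq> []" if "i \<in> S" for i using ms that unfolding mult_seq_def by blast
  show ?case
  proof (cases "\<forall>i\<in>S. length (as i) = 1")
    case True
    have "as i = [hd (as i)]" if "i \<in> S" for i
      using True ne that by (cases "as i") auto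
    then have "(\<lambda>i. Pseq (as i)) ` S = xminus ` (\<lambda>i. hd (as i)) ` S"
      unfolding image_image by (intro image_cong refl) (metis Pseq_single)
    then show ?thesis by simp
  next
    case False
    then obtain k where k: "k \<in> S" "length (as k) \<noteq> 1" by blast
    then have l2: "length (as k) \<ge> 2" using ne[OF k(1)] by (cases "as k") (auto simp: Suc_le_eq)
    note mb = mult_seq_butlast[OF bspec[OF ms k(1)] l2]
    define as' where "as' = as(k := butlast (as k))"
    define \<Omega>'' where "\<Omega>'' = (\<lambda>i. Pseq (as i)) ` (S - {k})"
    define Pk where "Pk = Pseq (as k)"
    define Pk' where "Pk' = Pseq (butlast (as k))"
    have hd': "(\<lambda>i. hd (as' i)) = (\<lambda>i. hd (as i))"
      using mb(2) by (auto simp: as'_def)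
    have ms': "\<forall>i\<in>S. mult_seq \<sigma> \<delta> (as' i)" using ms mb(1) by (auto simp: as'_def)
    have inj': "inj_on (\<lambda>i. hd (as' i)) S" using inj hd' by simp
    have sumlt: "(\<Sum>i\<in>S. length (as' i)) < (\<Sum>i\<in>S. length (as i))"
    proof (rule sum_strict_mono_ex1[OF fin])
      show "\<forall>i\<in>S. length (as' i) \<le> length (as i)" by (auto simp: as'_def)
      show "\<exists>i\<in>S. length (as' i) < length (as i)" using k l2 by (auto simp: as'_def)
    qed
    note IH = less(1)[OF sumlt fin ms' inj']
    have fin'': "finite \<Omega>''" using fin by (simp add: \<Omega>''_def)
    have nz'': "\<forall>P\<in>\<Omega>''. P \<noteq> 0" using Pseq_deg by (auto simp: \<Omega>''_def)
    have Pk0: "Pk \<noteq> 0" "Pk' \<noteq> 0" using Pseq_deg by (auto simp: Pk_def Pk'_def)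
    have zk: "\<And>b. ev Pk b = 0 \<longleftrightarrow> b = hd (as k)" using mult_seq_zero[OF bspec[OF ms k(1)]] by (simp add: Pk_def)
    have zk': "\<And>b. ev Pk' b = 0 \<longleftrightarrow> b = hd (as k)" using mult_seq_zero[OF mb(1)] mb(2) by (simp add: Pk'_def)
    have notin: "Q \<notin> \<Omega>''" if zQ: "\<And>b. ev Q b = 0 \<longleftrightarrow> b = hd (as k)" for Q
    proof
      assume "Q \<in> \<Omega>''"
      then obtain i where i: "i \<in> S" "i \<noteq> k" "Q = Pseq (as i)" by (auto simp: \<Omega>''_def)
      have "ev Q (hd (as k)) = 0" using zQ by simp
      then have "hd (as k) = hd (as i)" using mult_seq_zero[OF bspec[OF ms i(1)]] i(3) by simp
      then show False using inj k(1) i(1,2) unfolding inj_on_def by metis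
    qed
    have Om: "(\<lambda>i. Pseq (as i)) ` S = insert Pk \<Omega>''"
      using k(1) by (auto simp: \<Omega>''_def Pk_def)
    have Om': "(\<lambda>i. Pseq (as' i)) ` S = insert Pk' \<Omega>''"
      using k(1) by (auto simp: \<Omega>''_def Pk'_def as'_def)
    have I'': "I_ideal \<sigma> \<delta> \<Omega>'' \<noteq> {0}" using fin_I[OF fin'' nz''] by blast
    have G0: "F_gen \<sigma> \<delta> \<Omega>'' \<noteq> 0" using Fgen(3)[OF I''] .
    have st: "mindeg (SM (F_gen \<sigma> \<delta> \<Omega>'') Pk) = 0 \<longleftrightarrow> mindeg (SM (F_gen \<sigma> \<delta> \<Omega>'') Pk') = 0"
      by (rule mstep[OF G0 Pk0(2), of _ "last (as k)" "hd (as k)"]) (use mb(3) zk zk' in \<open>auto simp: Pk_def Pk'_def\<close>)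
    have "P_indep \<sigma> \<delta> ((\<lambda>i. Pseq (as i)) ` S) \<longleftrightarrow> P_indep \<sigma> \<delta> ((\<lambda>i. Pseq (as' i)) ` S)"
      unfolding Om Om' using insert_indep[OF fin'' nz'' Pk0(1) notin[OF zk]]
        insert_indep[OF fin'' nz'' Pk0(2) notin[OF zk']] st by simp
    also have "\<dots> \<longleftrightarrow> P_indep \<sigma> \<delta> (xminus ` (\<lambda>i. hd (as i)) ` S)" using IH hd' by metis
    finally show ?thesis .
  qed
qed

end



context skew begin

lemma cj_iff: "g \<noteq> 0 \<Longrightarrow> b = cj a g \<longleftrightarrow> b * g = \<sigma> g * a + \<delta> g"
proof
  assume g: "g \<noteq> 0" and b: "b = cj a g"
  have "b * g = (\<sigma> g * a * inverse g + \<delta> g * inverse g) * g" by (simp add: b cj_def skew_conj_def)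
  also have "\<dots> = \<sigma> g * a * (inverse g * g) + \<delta> g * (inverse g * g)" by (simp add: distrib_right mult.assoc)
  also have "\<dots> = \<sigma> g * a + \<delta> g" using g by simp
  finally show "b * g = \<sigma> g * a + \<delta> g" .
next
  assume g: "g \<noteq> 0" and b: "b * g = \<sigma> g * a + \<delta> g"
  have "b = b * g * inverse g" using g by (simp add: mult.assoc)
  also have "\<dots> = (\<sigma> g * a + \<delta> g) * inverse g" by (simp add: b)
  also have "\<dots> = cj a g" by (simp add: cj_def skew_conj_def distrib_right)
  finally show "b = cj a g" .
qed

lemma cj_mul: "g \<noteq> 0 \<Longrightarrow> cj a g * g = \<sigma> g * a + \<delta> g"
  using cj_iff by blast

lemma cj_cj:
  assumes b: "\<beta> \<noteq> 0" and g: "\<gamma> \<noteq> 0"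
  shows "cj (cj a \<gamma>) \<beta> = cj a (\<beta> * \<gamma>)"
proof -
  have bg: "\<beta> * \<gamma> \<noteq> 0" using b g by simp
  have "cj (cj a \<gamma>) \<beta> * (\<beta> * \<gamma>) = (cj (cj a \<gamma>) \<beta> * \<beta>) * \<gamma>" by (simp add: mult.assoc)
  also have "\<dots> = (\<sigma> \<beta> * cj a \<gamma> + \<delta> \<beta>) * \<gamma>" using cj_mul[OF b] by simp
  also have "\<dots> = \<sigma> \<beta> * (cj a \<gamma> * \<gamma>) + \<delta> \<beta> * \<gamma>" by (simp add: distrib_right mult.assoc)
  also have "\<dots> = \<sigma> \<beta> * (\<sigma> \<gamma> * a + \<delta> \<gamma>) + \<delta> \<beta> * \<gamma>" using cj_mul[OF g] by simp
  also have "\<dots> = \<sigma> (\<beta> * \<gamma>) * a + \<delta> (\<beta> * \<gamma>)" by (simp add: s_mult d_mult distrib_left mult.assoc add.assoc)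
  finally show ?thesis using cj_iff[OF bg] by blast
qed

lemma cj_1[simp]: "cj a 1 = a"
  using cj_iff[of 1 a a] by simp

lemma cj_inj: "\<beta> \<noteq> 0 \<Longrightarrow> cj b \<beta> = cj b' \<beta> \<Longrightarrow> b = b'"
proof -
  assume b: "\<beta> \<noteq> 0" and e: "cj b \<beta> = cj b' \<beta>"
  have "\<sigma> \<beta> * b + \<delta> \<beta> = \<sigma> \<beta> * b' + \<delta> \<beta>" by (metis cj_mul[OF b] e)
  then have "\<sigma> \<beta> * b = \<sigma> \<beta> * b'" by simp
  then show "b = b'" using b by auto
qed

abbreviation K where "K a \<equiv> centralizer \<sigma> \<delta> a"

lemma K_cj: "c \<in> K a \<Longrightarrow> c \<noteq> 0 \<Longrightarrow> cj a c = a"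
proof -
  assume "c \<in> K a" "c \<noteq> 0"
  then have "a * c = \<sigma> c * a + \<delta> c" by (simp add: centralizer_def)
  then have "a = cj a c" using cj_iff[OF \<open>c \<noteq> 0\<close>] by blast
  then show ?thesis by simp
qed

lemma cj_K: "cj a c = a \<Longrightarrow> c \<noteq> 0 \<Longrightarrow> c \<in> K a"
proof -
  assume "cj a c = a" "c \<noteq> 0"
  then have "a * c = \<sigma> c * a + \<delta> c" using cj_iff[OF \<open>c \<noteq> 0\<close>, of a a] by simp
  then show ?thesis by (simp add: centralizer_def)
qed

lemma K_0: "0 \<in> K a" by (simp add: centralizer_def)
lemma K_1: "1 \<in> K a" by (simp add: centralizer_def)
lemma K_uminus: "c \<in> K a \<Longrightarrow> - c \<in> K a"
proof -
  assume "c \<in> K a"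
  then have h: "\<sigma> c * a + \<delta> c = a * c" by (simp add: centralizer_def)
  have "\<sigma> (- c) * a + \<delta> (- c) = - (\<sigma> c * a + \<delta> c)" by (simp add: s_uminus d_uminus)
  also have "\<dots> = a * (- c)" using h by simp
  finally show ?thesis by (simp add: centralizer_def)
qed

definition Lv where "Lv F a \<beta> = ev (mul F [:\<beta>:]) a"

lemma Lv_char: "\<beta> \<noteq> 0 \<Longrightarrow> Lv F a \<beta> = ev F (cj a \<beta>) * \<beta>"
  unfolding Lv_def by (simp add: eval_mul)

lemma Lv_0[simp]: "Lv F a 0 = 0"
  unfolding Lv_def by simp

lemma Lv_add: "Lv F a (\<beta> + \<gamma>) = Lv F a \<beta> + Lv F a \<gamma>"
proof -
  have "mul F [:\<beta> + \<gamma>:] = mul F [:\<beta>:] + mul F [:\<gamma>:]" by (simp add: mul_add2[symmetric])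
  then show ?thesis unfolding Lv_def by (simp add: eval_add)
qed

lemma Lv_scal: "c \<in> K a \<Longrightarrow> Lv F a (\<beta> * c) = Lv F a \<beta> * c"
proof (cases "c = 0")
  case True then show ?thesis by simp
next
  case False
  assume cK: "c \<in> K a"
  have "mul F [:\<beta> * c:] = mul (mul F [:\<beta>:]) [:c:]" by (simp add: mul_assoc)
  then have "Lv F a (\<beta> * c) = ev (mul (mul F [:\<beta>:]) [:c:]) a" by (simp add: Lv_def)
  also have "\<dots> = ev (mul F [:\<beta>:]) (cj a c) * c" using False by (simp add: eval_mul)
  also have "\<dots> = Lv F a \<beta> * c" using K_cj[OF cK False] by (simp add: Lv_def)
  finally show ?thesis .
qed

lemma Lv_sum: "(\<forall>j<(m::nat). c j \<in> K a) \<Longrightarrow> Lv F a (\<Sum>j<m. \<beta> j * c j) = (\<Sum>j<m. Lv F a (\<beta> j) * c j)"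
  by (induction m) (auto simp: Lv_add Lv_scal)

lemma Lv_comp: "Lv (mul G H) a \<gamma> = 0 \<Longrightarrow> Lv G a (Lv H a \<gamma>) = 0"
proof -
  assume h0: "Lv (mul G H) a \<gamma> = 0"
  define h where "h = Lv H a \<gamma>"
  have e: "Lv (mul G H) a \<gamma> = (if h = 0 then 0 else ev G (cj a h) * h)"
    unfolding Lv_def h_def by (simp add: mul_assoc eval_mul)
  show ?thesis
  proof (cases "h = 0")
    case True then show ?thesis by (simp add: h_def[symmetric])
  next
    case False
    then have "ev G (cj a h) = 0" using h0 e by simp
    then show ?thesis using Lv_char[OF False] by (simp add: h_def[symmetric])
  qed
qed

lemma Lv_xminus: "\<gamma> \<noteq> 0 \<Longrightarrow> Lv (xminus e) a \<gamma> = (cj a \<gamma> - e) * \<gamma>"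
  by (simp add: Lv_char eval_xminus)

lemma indep_nz: "right_lin_indep (K a) \<beta> m \<Longrightarrow> j < m \<Longrightarrow> \<beta> j \<noteq> 0"
proof
  assume ind: "right_lin_indep (K a) \<beta> m" and j: "j < m" and b0: "\<beta> j = 0"
  define c where "c = (\<lambda>i. if i = j then (1::'a) else 0)"
  have "\<forall>i<m. c i \<in> K a" by (simp add: c_def K_0 K_1)
  moreover have "(\<Sum>i<m. \<beta> i * c i) = 0"
    by (rule sum.neutral) (auto simp: c_def b0)
  ultimately have "c j = 0" using ind j unfolding right_lin_indep_def by blast
  then show False by (simp add: c_def)
qed

end



context skew begin

lemma conj_sym_cj:
  assumes g: "\<gamma> \<noteq> 0" and b0: "\<beta>0 \<noteq> 0" and e: "cj b \<gamma> = cj a0 \<beta>0"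
  shows "skew_conjugate \<sigma> \<delta> a0 b"
proof -
  have gi: "inverse \<gamma> \<noteq> 0" using g by simp
  have "cj a0 (inverse \<gamma> * \<beta>0) = cj (cj a0 \<beta>0) (inverse \<gamma>)" using cj_cj[OF gi b0] by simp
  also have "\<dots> = cj (cj b \<gamma>) (inverse \<gamma>)" using e by simp
  also have "\<dots> = cj b (inverse \<gamma> * \<gamma>)" using cj_cj[OF gi g] by simp
  also have "\<dots> = b" using g by simp
  finally have "b = skew_conj \<sigma> \<delta> a0 (inverse \<gamma> * \<beta>0)" by (simp add: cj_def)
  moreover have "inverse \<gamma> * \<beta>0 \<noteq> 0" using g b0 by simp
  ultimately show ?thesis unfolding skew_conjugate_def by blast
qed

lemma indep_other:
  assumes ind: "right_lin_indep (K b) \<beta> m" and nc: "\<not> skew_conjugate \<sigma> \<delta> a0 b"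
    and b0: "\<beta>0 \<noteq> 0"
  shows "right_lin_indep (K b) (\<lambda>j. Lv (xminus (cj a0 \<beta>0)) b (\<beta> j)) m"
  unfolding right_lin_indep_def
proof (rule allI, rule impI, rule impI)
  fix c assume cK: "\<forall>j<m. c j \<in> K b" and s: "(\<Sum>j<m. Lv (xminus (cj a0 \<beta>0)) b (\<beta> j) * c j) = 0"
  define \<gamma> where "\<gamma> = (\<Sum>j<m. \<beta> j * c j)"
  have L: "Lv (xminus (cj a0 \<beta>0)) b \<gamma> = 0" using s Lv_sum[OF cK] by (simp add: \<gamma>_def)
  have "\<gamma> = 0"
  proof (rule ccontr)
    assume g: "\<gamma> \<noteq> 0"
    then have "(cj b \<gamma> - cj a0 \<beta>0) * \<gamma> = 0" using L Lv_xminus by simp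
    then have "cj b \<gamma> = cj a0 \<beta>0" using g by simp
    then show False using conj_sym_cj[OF g b0] nc by blast
  qed
  then show "\<forall>j<m. c j = 0" using ind cK unfolding right_lin_indep_def \<gamma>_def by blast
qed

lemma indep_same:
  assumes ind: "right_lin_indep (K b) \<beta> (Suc n)"
  shows "right_lin_indep (K b) (\<lambda>j. Lv (xminus (cj b (\<beta> 0))) b (\<beta> (Suc j))) n"
  unfolding right_lin_indep_def
proof (rule allI, rule impI, rule impI)
  fix c assume cK: "\<forall>j<n. c j \<in> K b" and s: "(\<Sum>j<n. Lv (xminus (cj b (\<beta> 0))) b (\<beta> (Suc j)) * c j) = 0"
  have b0: "\<beta> 0 \<noteq> 0" using indep_nz[OF ind] by simp
  define \<gamma> where "\<gamma> = (\<Sum>j<n. \<beta> (Suc j) * c j)"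
  have L: "Lv (xminus (cj b (\<beta> 0))) b \<gamma> = 0" using s Lv_sum[OF cK] by (simp add: \<gamma>_def)
  have "\<exists>t. t \<in> K b \<and> \<gamma> = \<beta> 0 * t"
  proof (cases "\<gamma> = 0")
    case True then show ?thesis using K_0 by auto
  next
    case g: False
    then have "(cj b \<gamma> - cj b (\<beta> 0)) * \<gamma> = 0" using L Lv_xminus by simp
    then have e: "cj b \<gamma> = cj b (\<beta> 0)" using g by simp
    define t where "t = inverse (\<beta> 0) * \<gamma>"
    have t0: "t \<noteq> 0" using g b0 by (simp add: t_def)
    have gt: "\<gamma> = \<beta> 0 * t" using b0 by (simp add: t_def mult.assoc[symmetric])
    have "cj (cj b t) (\<beta> 0) = cj b (\<beta> 0)" using cj_cj[OF b0 t0] e gt by simp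
    then have "cj b t = b" using cj_inj[OF b0] by blast
    then have "t \<in> K b" using cj_K t0 by blast
    then show ?thesis using gt by blast
  qed
  then obtain t where t: "t \<in> K b" "\<gamma> = \<beta> 0 * t" by blast
  define c' where "c' = (\<lambda>j. if j = 0 then - t else c (j - 1))"
  have c'K: "\<forall>j<Suc n. c' j \<in> K b" using cK t(1) K_uminus by (auto simp: c'_def)
  have "(\<Sum>j<Suc n. \<beta> j * c' j) = \<beta> 0 * (- t) + (\<Sum>j<n. \<beta> (Suc j) * c j)"
    by (subst sum.lessThan_Suc_shift) (simp add: c'_def)
  also have "\<dots> = 0" using t(2) by (simp add: \<gamma>_def[symmetric])
  finally have "\<forall>j<Suc n. c' j = 0" using ind c'K unfolding right_lin_indep_def by blast
  then show "\<forall>j<n. c j = 0" by (auto simp: c'_def)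
qed

lemma count_step:
  fixes l :: nat and m :: "nat \<Rightarrow> nat" and \<beta> :: "nat \<Rightarrow> nat \<Rightarrow> 'a"
  assumes F: "F \<noteq> 0"
    and nc: "\<forall>i<l. \<forall>j<l. i \<noteq> j \<longrightarrow> \<not> skew_conjugate \<sigma> \<delta> (a i) (a j)"
    and ind: "\<forall>i<l. right_lin_indep (K (a i)) (\<beta> i) (m i)"
    and V: "\<forall>i<l. \<forall>j<m i. Lv F (a i) (\<beta> i j) = 0"
    and pos: "(\<Sum>i<l. m i) > 0"
  shows "\<exists>G m' \<beta>'. G \<noteq> 0 \<and> degree F = Suc (degree G) \<and> Suc (\<Sum>i<l. m' i) = (\<Sum>i<l. m i)
     \<and> (\<forall>i<l. right_lin_indep (K (a i)) (\<beta>' i) (m' i)) \<and> (\<forall>i<l. \<forall>j<m' i. Lv G (a i) (\<beta>' i j) = 0)"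
proof -
  have "\<exists>i<l. m i > 0"
  proof (rule ccontr)
    assume "\<not> (\<exists>i<l. m i > 0)"
    then have "\<forall>i\<in>{..<l}. m i = 0" by auto
    then have "(\<Sum>i<l. m i) = 0" by simp
    then show False using pos by simp
  qed
  then obtain i0 where i0: "i0 < l" "m i0 > 0" by blast
  define \<beta>0 where "\<beta>0 = \<beta> i0 0"
  have b0: "\<beta>0 \<noteq> 0" using indep_nz[of "a i0" "\<beta> i0" "m i0" 0] ind i0 by (simp add: \<beta>0_def)
  define e where "e = cj (a i0) \<beta>0"
  have "Lv F (a i0) \<beta>0 = 0" using V i0 by (simp add: \<beta>0_def)
  then have "ev F e = 0" using Lv_char[OF b0] b0 by (simp add: e_def)
  then obtain G where G: "F = mul G (xminus e)" using eval_zero_iff unfolding right_dvd_def by blast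
  have G0: "G \<noteq> 0" using F G by auto
  have dF: "degree F = Suc (degree G)" using G degree_mul'[OF G0 xminus_nz] by simp
  define m' where "m' = m(i0 := m i0 - 1)"
  define \<beta>' where "\<beta>' = (\<lambda>i. if i = i0 then (\<lambda>j. Lv (xminus e) (a i) (\<beta> i (Suc j))) else (\<lambda>j. Lv (xminus e) (a i) (\<beta> i j)))"
  have ind': "\<forall>i<l. right_lin_indep (K (a i)) (\<beta>' i) (m' i)"
  proof (intro allI impI)
    fix i assume i: "i < l"
    show "right_lin_indep (K (a i)) (\<beta>' i) (m' i)"
    proof (cases "i = i0")
      case True
      have "m i = Suc (m' i)" using True i0 by (simp add: m'_def)
      moreover have "right_lin_indep (K (a i)) (\<beta> i) (m i)" using ind i by blast
      ultimately have "right_lin_indep (K (a i)) (\<beta> i) (Suc (m' i))" by simp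
      from indep_same[OF this] show ?thesis using True by (simp add: \<beta>'_def e_def \<beta>0_def)
    next
      case False
      have nc': "\<not> skew_conjugate \<sigma> \<delta> (a i0) (a i)" using nc i i0 False by blast
      from indep_other[OF _ nc' b0, of "\<beta> i" "m i"] show ?thesis
        using ind i False by (simp add: \<beta>'_def e_def m'_def)
    qed
  qed
  have V': "\<forall>i<l. \<forall>j<m' i. Lv G (a i) (\<beta>' i j) = 0"
  proof (intro allI impI)
    fix i j assume i: "i < l" and j: "j < m' i"
    show "Lv G (a i) (\<beta>' i j) = 0"
    proof (cases "i = i0")
      case True
      then have "Suc j < m i" using j i0 by (simp add: m'_def)
      then have "Lv (mul G (xminus e)) (a i) (\<beta> i (Suc j)) = 0" using V i G by simp
      then show ?thesis using True Lv_comp by (simp add: \<beta>'_def)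
    next
      case False
      then have "j < m i" using j by (simp add: m'_def)
      then have "Lv (mul G (xminus e)) (a i) (\<beta> i j) = 0" using V i G by simp
      then show ?thesis using False Lv_comp by (simp add: \<beta>'_def)
    qed
  qed
  have "(\<Sum>i<l. m i) = m i0 + (\<Sum>i\<in>{..<l} - {i0}. m i)"
    by (rule sum.remove) (use i0 in auto)
  moreover have "(\<Sum>i<l. m' i) = m' i0 + (\<Sum>i\<in>{..<l} - {i0}. m' i)"
    by (rule sum.remove) (use i0 in auto)
  moreover have "(\<Sum>i\<in>{..<l} - {i0}. m' i) = (\<Sum>i\<in>{..<l} - {i0}. m i)"
    by (rule sum.cong) (auto simp: m'_def)
  ultimately have "Suc (\<Sum>i<l. m' i) = (\<Sum>i<l. m i)" using i0 by (simp add: m'_def)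
  then show ?thesis using G0 dF ind' V' by blast
qed

lemma counting:
  fixes l :: nat and m :: "nat \<Rightarrow> nat" and \<beta> :: "nat \<Rightarrow> nat \<Rightarrow> 'a"
  assumes "F \<noteq> 0" "degree F = d"
    "\<forall>i<l. \<forall>j<l. i \<noteq> j \<longrightarrow> \<not> skew_conjugate \<sigma> \<delta> (a i) (a j)"
    "\<forall>i<l. right_lin_indep (K (a i)) (\<beta> i) (m i)"
    "\<forall>i<l. \<forall>j<m i. Lv F (a i) (\<beta> i j) = 0"
  shows "(\<Sum>i<l. m i) \<le> d"
  using assms
proof (induction d arbitrary: F m \<beta>)
  case 0
  show ?case
  proof (rule ccontr)
    assume "\<not> (\<Sum>i<l. m i) \<le> 0"
    then have "(\<Sum>i<l. m i) > 0" by linarith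
    then obtain G m' \<beta>' where G: "G \<noteq> 0" "degree F = Suc (degree G)" "Suc (\<Sum>i<l. m' i) = (\<Sum>i<l. m i)"
      "\<forall>i<l. right_lin_indep (K (a i)) (\<beta>' i) (m' i)" "\<forall>i<l. \<forall>j<m' i. Lv G (a i) (\<beta>' i j) = 0"
      using count_step[OF "0.prems"(1,3,4,5)] by blast
    then show False using "0.prems"(2) by auto
  qed
next
  case (Suc d)
  show ?case
  proof (cases "(\<Sum>i<l. m i) = 0")
    case True then show ?thesis by simp
  next
    case False
    then have pos: "(\<Sum>i<l. m i) > 0" by linarith
    obtain G m' \<beta>' where G: "G \<noteq> 0" "degree F = Suc (degree G)" "Suc (\<Sum>i<l. m' i) = (\<Sum>i<l. m i)"
      "\<forall>i<l. right_lin_indep (K (a i)) (\<beta>' i) (m' i)" "\<forall>i<l. \<forall>j<m' i. Lv G (a i) (\<beta>' i j) = 0"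
      using count_step[OF Suc.prems(1,3,4,5) pos] by blast
    have "(\<Sum>i<l. m' i) \<le> d" using Suc.IH[OF G(1) _ Suc.prems(3) G(4) G(5)] G(2) Suc.prems(2) by simp
    then show ?thesis using G(3) by simp
  qed
qed

end




context skew begin

lemma xminus_inj: "inj xminus"
  by (rule injI) (simp add: xminus_def)

lemma elems_basic:
  assumes fin: "finite \<Psi>"
  shows "finite (xminus ` \<Psi>)" "\<forall>P\<in>xminus ` \<Psi>. P \<noteq> 0"
    "(\<Sum>P\<in>xminus ` \<Psi>. degree P) = card \<Psi>"
proof -
  show "finite (xminus ` \<Psi>)" using fin by simp
  show "\<forall>P\<in>xminus ` \<Psi>. P \<noteq> 0" by simp
  have "(\<Sum>P\<in>xminus ` \<Psi>. degree P) = (\<Sum>b\<in>\<Psi>. degree (xminus b))"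
    by (rule sum.reindex[unfolded comp_def]) (meson inj_on_subset subset_UNIV xminus_inj)
  then show "(\<Sum>P\<in>xminus ` \<Psi>. degree P) = card \<Psi>" by simp
qed

lemma I_zero:
  assumes "F \<in> I_ideal \<sigma> \<delta> (xminus ` \<Psi>)" "b \<in> \<Psi>"
  shows "ev F b = 0"
  using assms eval_zero_iff unfolding I_ideal_def by blast

lemma part23:
  fixes n l :: nat and as :: "nat \<Rightarrow> 'a list" and a :: "nat \<Rightarrow> 'a" and m :: "nat \<Rightarrow> nat" and \<beta> :: "nat \<Rightarrow> nat \<Rightarrow> 'a"
  assumes dist: "inj_on (\<lambda>i. hd (as i)) {..<n}"
    and nonconj: "\<forall>i<l. \<forall>j<l. i \<noteq> j \<longrightarrow> \<not> skew_conjugate \<sigma> \<delta> (a i) (a j)"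
    and bnz: "\<forall>i<l. \<forall>j<m i. \<beta> i j \<noteq> 0"
    and nsum: "n = (\<Sum>i<l. m i)"
    and cover: "(\<lambda>i. hd (as i)) ` {..<n} = (\<Union>i<l. (\<lambda>j. skew_conj \<sigma> \<delta> (a i) (\<beta> i j)) ` {..<m i})"
  shows "P_indep_elems \<sigma> \<delta> ((\<lambda>i. hd (as i)) ` {..<n})
            \<longleftrightarrow> (\<forall>i<l. right_lin_indep (centralizer \<sigma> \<delta> (a i)) (\<beta> i) (m i))"
proof -
  define \<Psi> where "\<Psi> = (\<lambda>i. hd (as i)) ` {..<n}"
  define SS where "SS = Sigma {..<l} (\<lambda>i. {..<m i})"
  define cf where "cf = (\<lambda>p. cj (a (fst p)) (\<beta> (fst p) (snd p)))"
  have finP: "finite \<Psi>" by (simp add: \<Psi>_def)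
  have cardP: "card \<Psi> = n" using card_image[OF dist] by (simp add: \<Psi>_def)
  have Pcf: "\<Psi> = cf ` SS" unfolding \<Psi>_def cover SS_def cf_def cj_def by force
  have finSS: "finite SS" by (simp add: SS_def)
  have cardSS: "card SS = n" by (simp add: SS_def card_SigmaI nsum)
  have injcf: "inj_on cf SS" using eq_card_imp_inj_on[OF finSS] cardP cardSS Pcf by simp
  have inP: "cj (a i) (\<beta> i j) \<in> \<Psi>" if "i < l" "j < m i" for i j
    using that Pcf by (force simp: SS_def cf_def)
  note eb = elems_basic[OF finP]
  have PE: "P_indep_elems \<sigma> \<delta> \<Psi> \<longleftrightarrow> P_indep \<sigma> \<delta> (xminus ` \<Psi>)"
    using finP by (simp add: P_indep_elems_def)
  show ?thesis
    unfolding \<Psi>_def[symmetric] PE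
  proof
    assume ind: "P_indep \<sigma> \<delta> (xminus ` \<Psi>)"
    show "\<forall>i<l. right_lin_indep (K (a i)) (\<beta> i) (m i)"
    proof (intro allI impI)
      fix i assume i: "i < l"
      show "right_lin_indep (K (a i)) (\<beta> i) (m i)"
        unfolding right_lin_indep_def
      proof (rule allI, rule impI, rule impI, rule ccontr)
        fix c assume cK: "\<forall>j<m i. c j \<in> K (a i)" and s: "(\<Sum>j<m i. \<beta> i j * c j) = 0"
          and nz: "\<not> (\<forall>j<m i. c j = 0)"
        then obtain j0 where j0: "j0 < m i" "c j0 \<noteq> 0" by blast
        define b where "b = cj (a i) (\<beta> i j0)"
        have bP: "b \<in> \<Psi>" using inP i j0 by (simp add: b_def)
        define \<Omega>0 where "\<Omega>0 = xminus ` (\<Psi> - {b})"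
        have fin0: "finite (\<Psi> - {b})" using finP by simp
        note e0 = elems_basic[OF fin0]
        have Om: "xminus ` \<Psi> = insert (xminus b) \<Omega>0" using bP by (auto simp: \<Omega>0_def)
        have notin: "xminus b \<notin> \<Omega>0" using xminus_inj unfolding \<Omega>0_def inj_def by auto
        have I0: "I_ideal \<sigma> \<delta> \<Omega>0 \<noteq> {0}" using fin_I[OF e0(1,2)] by (simp add: \<Omega>0_def)
        define G where "G = F_gen \<sigma> \<delta> \<Omega>0"
        have G0: "G \<noteq> 0" using Fgen(3)[OF I0] by (simp add: G_def)
        have GI: "G \<in> I_ideal \<sigma> \<delta> \<Omega>0" using Fgen(1)[OF I0] by (simp add: G_def)
        have "mindeg (SM G (xminus b)) = 0"
          using ind insert_indep[OF e0(1,2)[folded \<Omega>0_def] xminus_nz notin] Om by (simp add: G_def)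
        then have Gb: "ev G b \<noteq> 0"
          using SM_xminus[of b G "xminus b"] G0 eval_zero_iff rdvd_refl by blast
        have Lz: "Lv G (a i) (\<beta> i j) = 0" if j: "j < m i" "j \<noteq> j0" for j
        proof -
          have "cj (a i) (\<beta> i j) \<in> \<Psi>" using inP i j by simp
          moreover have "cj (a i) (\<beta> i j) \<noteq> b"
          proof
            assume "cj (a i) (\<beta> i j) = b"
            then have "cf (i, j) = cf (i, j0)" by (simp add: cf_def b_def)
            then have "(i, j) = (i, j0)" using injcf i j j0 unfolding inj_on_def SS_def by blast
            then show False using j by simp
          qed
          ultimately have "ev G (cj (a i) (\<beta> i j)) = 0"
            using I_zero[of G "\<Psi> - {b}"] GI by (simp add: \<Omega>0_def)
          then show ?thesis using Lv_char bnz i j by simp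
        qed
        have "Lv G (a i) (\<Sum>j<m i. \<beta> i j * c j) = (\<Sum>j<m i. Lv G (a i) (\<beta> i j) * c j)"
          by (rule Lv_sum[OF cK])
        also have "\<dots> = (\<Sum>j<m i. if j = j0 then Lv G (a i) (\<beta> i j0) * c j0 else 0)"
          by (rule sum.cong) (auto simp: Lz)
        also have "\<dots> = Lv G (a i) (\<beta> i j0) * c j0" using j0 by simp
        finally have "Lv G (a i) (\<beta> i j0) * c j0 = 0" using s by simp
        then have "Lv G (a i) (\<beta> i j0) = 0" using j0 by simp
        then have "ev G b * \<beta> i j0 = 0" using Lv_char bnz i j0 by (simp add: b_def)
        then show False using Gb bnz i j0 by simp
      qed
    qed
  next
    assume ind: "\<forall>i<l. right_lin_indep (K (a i)) (\<beta> i) (m i)"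
    have I: "I_ideal \<sigma> \<delta> (xminus ` \<Psi>) \<noteq> {0}" and le: "mindeg (I_ideal \<sigma> \<delta> (xminus ` \<Psi>)) \<le> n"
      using fin_I[OF eb(1,2)] eb(3) cardP by auto
    define F where "F = F_gen \<sigma> \<delta> (xminus ` \<Psi>)"
    have F0: "F \<noteq> 0" using Fgen(3)[OF I] by (simp add: F_def)
    have FI: "F \<in> I_ideal \<sigma> \<delta> (xminus ` \<Psi>)" using Fgen(1)[OF I] by (simp add: F_def)
    have dF: "degree F = mindeg (I_ideal \<sigma> \<delta> (xminus ` \<Psi>))" using Fgen(4)[OF I] by (simp add: F_def)
    have V: "\<forall>i<l. \<forall>j<m i. Lv F (a i) (\<beta> i j) = 0"
    proof (intro allI impI)
      fix i j assume "i < l" "j < m i"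
      then show "Lv F (a i) (\<beta> i j) = 0" using Lv_char bnz I_zero[OF FI inP] by simp
    qed
    have "(\<Sum>i<l. m i) \<le> degree F" by (rule counting[OF F0 refl nonconj ind V])
    then have "mindeg (I_ideal \<sigma> \<delta> (xminus ` \<Psi>)) = (\<Sum>P\<in>xminus ` \<Psi>. degree P)"
      using le dF nsum eb(3) cardP by simp
    then show "P_indep \<sigma> \<delta> (xminus ` \<Psi>)" using P_indep_iff[OF eb(1,2)] by simp
  qed
qed

end

theorem mainTheorem10:
  fixes \<sigma> \<delta> :: "'a::division_ring \<Rightarrow> 'a"
    and n l :: nat and as :: "nat \<Rightarrow> 'a list"
    and a :: "nat \<Rightarrow> 'a" and m :: "nat \<Rightarrow> nat" and \<beta> :: "nat \<Rightarrow> nat \<Rightarrow> 'a"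
  assumes endo: "is_ring_endo \<sigma>"
    and der: "is_sigma_derivation \<sigma> \<delta>"
    and mseq: "\<forall>i<n. mult_seq \<sigma> \<delta> (as i)"
    and dist: "inj_on (\<lambda>i. hd (as i)) {..<n}"
    and nonconj: "\<forall>i<l. \<forall>j<l. i \<noteq> j \<longrightarrow> \<not> skew_conjugate \<sigma> \<delta> (a i) (a j)"
    and mpos: "\<forall>i<l. m i > 0"
    and bnz: "\<forall>i<l. \<forall>j<m i. \<beta> i j \<noteq> 0"
    and nsum: "n = (\<Sum>i<l. m i)"
    and cover: "(\<lambda>i. hd (as i)) ` {..<n} = (\<Union>i<l. (\<lambda>j. skew_conj \<sigma> \<delta> (a i) (\<beta> i j)) ` {..<m i})"
  shows "(P_indep \<sigma> \<delta> ((\<lambda>i. P_seq \<sigma> \<delta> (as i)) ` {..<n})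
            \<longleftrightarrow> P_indep_elems \<sigma> \<delta> ((\<lambda>i. hd (as i)) ` {..<n}))
       \<and> (P_indep_elems \<sigma> \<delta> ((\<lambda>i. hd (as i)) ` {..<n})
            \<longleftrightarrow> (\<forall>i<l. right_lin_indep (centralizer \<sigma> \<delta> (a i)) (\<beta> i) (m i)))"
proof -
  interpret skew \<sigma> \<delta> by (rule skew.intro[OF endo der])
  have A: "P_indep \<sigma> \<delta> ((\<lambda>i. P_seq \<sigma> \<delta> (as i)) ` {..<n}) \<longleftrightarrow> P_indep_elems \<sigma> \<delta> ((\<lambda>i. hd (as i)) ` {..<n})"
    using multi[of "{..<n}" as] mseq dist by (simp add: P_indep_elems_def)
  have B: "P_indep_elems \<sigma> \<delta> ((\<lambda>i. hd (as i)) ` {..<n}) \<longleftrightarrow> (\<forall>i<l. right_lin_indep (centralizer \<sigma> \<delta> (a i)) (\<beta> i) (m i))"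
    by (rule part23[OF dist nonconj bnz nsum cover])
  show ?thesis using A B by blast
qed


end
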